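(* Let $d=2^N$ and let $O_1,\ldots,O_M$ be a set of distinct non-identity $N$-qubit Pauli observables. If a non-adaptive algorithm measures each copy of the unknown state with one of the measurements $\mathcal{M}_i:=\{\frac{\mathbb{I}_d-O_i}{2},\frac{\mathbb{I}_d+O_i}{2}\}$, $i\in[M]$, then under $\gamma$-adversarial corruption it must incur an error of $\varepsilon=\Omega(\gamma M)$ in estimating $\operatorname{Tr}[O_i\rho]$ for some $i$.
   Context: An $N$-qubit Pauli observable is a tensor product $P_1\otimes\cdots\otimes P_N$ with each $P_k\in\{I,X,Y,Z\}$ (single-qubit Pauli matrices). Shadow tomography: output $E_1,\ldots,E_M$ with $|E_i-\operatorname{Tr}[O_i\rho]|\le\varepsilon$ for all $i$ with high (constant) probability. Non-adaptive: the measurement for each copy is chosen without depending on previous outcomes. $\gamma$-adversarial corruption: after all outcomes are obtained, an adversary with perfect knowledge of the measurements arbitrarily changes a $\gamma$-fraction of them, and the algorithm only sees the corrupted outcomes. *)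

theory Defs
  imports "Jordan_Normal_Form.Matrix" "HOL-Probability.Product_PMF"
begin

definition kron :: "complex mat \<Rightarrow> complex mat \<Rightarrow> complex mat" where
  "kron A B = Matrix.mat (dim_row A * dim_row B) (dim_col A * dim_col B)
     (\<lambda>(i,j). A $$ (i div dim_row B, j div dim_col B) * B $$ (i mod dim_row B, j mod dim_col B))"

definition pauli_X :: "complex mat" where
  "pauli_X = Matrix.mat 2 2 (\<lambda>(i,j). if i \<noteq> j then 1 else 0)"

definition pauli_Y :: "complex mat" where
  "pauli_Y = Matrix.mat 2 2 (\<lambda>(i,j). if i = 0 \<and> j = 1 then - \<i> else if i = 1 \<and> j = 0 then \<i> else 0)"

definition pauli_Z :: "complex mat" where
  "pauli_Z = Matrix.mat 2 2 (\<lambda>(i,j). if i = j then (if i = 0 then 1 else -1) else 0)"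

definition pauli1 :: "nat \<Rightarrow> complex mat" where
  "pauli1 k = (if k = 0 then 1\<^sub>m 2 else if k = 1 then pauli_X else if k = 2 then pauli_Y else pauli_Z)"

definition is_pauli_string :: "nat \<Rightarrow> nat list \<Rightarrow> bool" where
  "is_pauli_string N p \<longleftrightarrow> length p = N \<and> (\<forall>k \<in> set p. k < 4)"

definition pauli_obs :: "nat list \<Rightarrow> complex mat" where
  "pauli_obs p = foldr (\<lambda>k A. kron (pauli1 k) A) p (1\<^sub>m 1)"

definition mtrace :: "complex mat \<Rightarrow> complex" where
  "mtrace A = (\<Sum>i<dim_row A. A $$ (i,i))"

definition density_matrix :: "nat \<Rightarrow> complex mat \<Rightarrow> bool" where
  "density_matrix d \<rho> \<longleftrightarrow> \<rho> \<in> carrier_mat d d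
     \<and> (\<forall>i<d. \<forall>j<d. \<rho> $$ (i,j) = cnj (\<rho> $$ (j,i)))
     \<and> (\<forall>v :: nat \<Rightarrow> complex. 0 \<le> Re (\<Sum>i<d. \<Sum>j<d. cnj (v i) * \<rho> $$ (i,j) * v j))
     \<and> mtrace \<rho> = 1"

text \<open>The two-outcome measurement {(I-O)/2, (I+O)/2}: outcome True is +1 (projector (I+O)/2),
  outcome False is -1 (projector (I-O)/2).\<close>
definition meas_proj :: "complex mat \<Rightarrow> bool \<Rightarrow> complex mat" where
  "meas_proj Q b = (1/2) \<cdot>\<^sub>m (1\<^sub>m (dim_row Q) + (if b then 1 else -1) \<cdot>\<^sub>m Q)"

definition born_prob :: "complex mat \<Rightarrow> complex mat \<Rightarrow> bool \<Rightarrow> real" where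
  "born_prob Q \<rho> b = Re (mtrace (meas_proj Q b * \<rho>))"

text \<open>Expectation value Tr[O rho] (real for Hermitian O and rho).\<close>
definition expval :: "complex mat \<Rightarrow> complex mat \<Rightarrow> real" where
  "expval Q \<rho> = Re (mtrace (Q * \<rho>))"

text \<open>Distribution of the (uncorrupted) outcomes of T independent copies of rho, copy t being measured
  with the measurement of index s t.  Outcomes are vectors indexed by {..<T}.\<close>
definition outcome_dist ::
  "(nat \<Rightarrow> nat list) \<Rightarrow> nat \<Rightarrow> (nat \<Rightarrow> nat) \<Rightarrow> complex mat \<Rightarrow> (nat \<Rightarrow> bool) pmf" where
  "outcome_dist ps T s \<rho> = Pi_pmf {..<T} False (\<lambda>t. bernoulli_pmf (born_prob (pauli_obs (ps (s t))) \<rho> True))"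

text \<open>A (deterministic) gamma-adversary sees the measurement schedule and the outcomes and changes
  at most a gamma-fraction of the T outcomes.\<close>
definition admissible_adversary ::
  "real \<Rightarrow> nat \<Rightarrow> ((nat \<Rightarrow> nat) \<Rightarrow> (nat \<Rightarrow> bool) \<Rightarrow> (nat \<Rightarrow> bool)) \<Rightarrow> bool" where
  "admissible_adversary \<gamma> T adv \<longleftrightarrow>
     (\<forall>s x. {t. adv s x t \<noteq> x t} \<subseteq> {..<T} \<and> real (card {t. adv s x t \<noteq> x t}) \<le> \<gamma> * real T)"

text \<open>A randomized non-adaptive algorithm using T copies is a probability distribution over pairs
  (schedule s, estimator e): s t is the index of the measurement applied to copy t (fixed before any
  outcome is seen), and e maps the corrupted outcome vector to estimates E_0, ..., E_(M-1).\<close>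
type_synonym nonadaptive_alg = "((nat \<Rightarrow> nat) \<times> ((nat \<Rightarrow> bool) \<Rightarrow> (nat \<Rightarrow> real))) pmf"

definition valid_alg :: "nat \<Rightarrow> nat \<Rightarrow> nonadaptive_alg \<Rightarrow> bool" where
  "valid_alg M T A \<longleftrightarrow> (\<forall>(s,e) \<in> set_pmf A. \<forall>t<T. s t < M)"

definition estimates_dist ::
  "(nat \<Rightarrow> nat list) \<Rightarrow> nat \<Rightarrow> nonadaptive_alg \<Rightarrow> complex mat
     \<Rightarrow> ((nat \<Rightarrow> nat) \<Rightarrow> (nat \<Rightarrow> bool) \<Rightarrow> (nat \<Rightarrow> bool)) \<Rightarrow> (nat \<Rightarrow> real) pmf" where
  "estimates_dist ps T A \<rho> adv =
     bind_pmf A (\<lambda>(s,e). map_pmf (\<lambda>x. e (adv s x)) (outcome_dist ps T s \<rho>))"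

definition success_prob ::
  "(nat \<Rightarrow> nat list) \<Rightarrow> nat \<Rightarrow> nat \<Rightarrow> nonadaptive_alg \<Rightarrow> complex mat
     \<Rightarrow> ((nat \<Rightarrow> nat) \<Rightarrow> (nat \<Rightarrow> bool) \<Rightarrow> (nat \<Rightarrow> bool)) \<Rightarrow> real \<Rightarrow> real" where
  "success_prob ps M T A \<rho> adv \<epsilon> =
     measure_pmf.prob (estimates_dist ps T A \<rho> adv)
       {E. \<forall>j<M. \<bar>E j - expval (pauli_obs (ps j)) \<rho>\<bar> \<le> \<epsilon>}"

end

theory Submission
  imports Defs
begin


lemma kron_carrier: "A \<in> carrier_mat n n \<Longrightarrow> B \<in> carrier_mat m m \<Longrightarrow> kron A B \<in> carrier_mat (n*m) (n*m)"
  by (simp add: kron_def)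

lemma kron_index: "A \<in> carrier_mat n n \<Longrightarrow> B \<in> carrier_mat m m \<Longrightarrow> i < n*m \<Longrightarrow> j < n*m \<Longrightarrow>
   kron A B $$ (i,j) = A $$ (i div m, j div m) * B $$ (i mod m, j mod m)"
  by (simp add: kron_def)

lemma sum_split_nm: "(\<Sum>l<(n::nat)*m. f l) = (\<Sum>a<n. \<Sum>b<m. (f (b + a*m) :: 'x::comm_monoid_add))"
proof (induction n)
  case (Suc n)
  have "(\<Sum>l<Suc n*m. f l) = (\<Sum>l<n*m. f l) + (\<Sum>l\<in>{n*m..<n*m+m}. f l)"
    by (simp add: add.commute sum.atLeastLessThan_concat[symmetric] lessThan_atLeast0)
  also have "(\<Sum>l\<in>{n*m..<n*m+m}. f l) = (\<Sum>b<m. f (b + n*m))"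
    using sum.shift_bounds_nat_ivl[of f 0 "n*m" m] by (simp add: lessThan_atLeast0 add.commute)
  finally show ?case using Suc by simp
qed simp

lemma divmod_aux: "b < (m::nat) \<Longrightarrow> (b + a*m) div m = a \<and> (b + a*m) mod m = b"
  by auto

lemma kron_mult:
  assumes A: "A \<in> carrier_mat n n" and C: "C \<in> carrier_mat n n"
    and B: "B \<in> carrier_mat m m" and D: "D \<in> carrier_mat m m"
  shows "kron A B * kron C D = kron (A*C) (B*D)"
proof (rule eq_matI)
  show "dim_row (kron A B * kron C D) = dim_row (kron (A * C) (B * D))"
    using assms by (simp add: kron_def)
  show "dim_col (kron A B * kron C D) = dim_col (kron (A * C) (B * D))"
    using assms by (simp add: kron_def)
  fix i j assume "i < dim_row (kron (A * C) (B * D))" "j < dim_col (kron (A * C) (B * D))"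
  then have i: "i < n*m" and j: "j < n*m" using assms by (auto simp: kron_def)
  have m0: "m > 0" using i by (cases m) auto
  have id: "i div m < n" "j div m < n" using i j by (auto simp: less_mult_imp_div_less)
  have "(kron A B * kron C D) $$ (i,j) = (\<Sum>l<n*m. kron A B $$ (i,l) * kron C D $$ (l,j))"
    using assms i j by (simp add: kron_def scalar_prod_def atLeast0LessThan)
  also have "\<dots> = (\<Sum>a<n. \<Sum>b<m. kron A B $$ (i,b + a*m) * kron C D $$ (b + a*m,j))"
    by (rule sum_split_nm)
  also have "\<dots> = (\<Sum>a<n. \<Sum>b<m. (A $$ (i div m, a) * C $$ (a, j div m)) * (B $$ (i mod m, b) * D $$ (b, j mod m)))"
  proof (intro sum.cong refl)
    fix a b assume a: "a \<in> {..<n}" and b: "b \<in> {..<m}"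
    have lt: "b + a*m < n*m"
    proof -
      have "b + a*m < m + a*m" using b by simp
      also have "\<dots> = (a+1)*m" by simp
      also have "\<dots> \<le> n*m" using a by (intro mult_right_mono) auto
      finally show ?thesis .
    qed
    show "kron A B $$ (i,b + a*m) * kron C D $$ (b + a*m,j) = (A $$ (i div m, a) * C $$ (a, j div m)) * (B $$ (i mod m, b) * D $$ (b, j mod m))"
      using kron_index[OF A B i lt] kron_index[OF C D lt j] divmod_aux[of b m a] b by simp
  qed
  also have "\<dots> = (\<Sum>a<n. A $$ (i div m, a) * C $$ (a, j div m)) * (\<Sum>b<m. B $$ (i mod m, b) * D $$ (b, j mod m))"
    by (simp add: sum_product)
  also have "\<dots> = (A*C) $$ (i div m, j div m) * (B*D) $$ (i mod m, j mod m)"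
    using assms id m0 by (simp add: scalar_prod_def atLeast0LessThan)
  also have "\<dots> = kron (A*C) (B*D) $$ (i,j)"
    using assms i j by (simp add: kron_def)
  finally show "(kron A B * kron C D) $$ (i,j) = kron (A*C) (B*D) $$ (i,j)" .
qed

lemma kron_trace:
  assumes A: "A \<in> carrier_mat n n" and B: "B \<in> carrier_mat m m"
  shows "mtrace (kron A B) = mtrace A * mtrace B"
proof -
  have "mtrace (kron A B) = (\<Sum>l<n*m. kron A B $$ (l,l))" using assms by (simp add: mtrace_def kron_def)
  also have "\<dots> = (\<Sum>a<n. \<Sum>b<m. kron A B $$ (b + a*m, b + a*m))" by (rule sum_split_nm)
  also have "\<dots> = (\<Sum>a<n. \<Sum>b<m. A $$ (a,a) * B $$ (b,b))"
  proof (intro sum.cong refl)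
    fix a b assume a: "a \<in> {..<n}" and b: "b \<in> {..<m}"
    have lt: "b + a*m < n*m"
    proof -
      have "b + a*m < m + a*m" using b by simp
      also have "\<dots> = (a+1)*m" by simp
      also have "\<dots> \<le> n*m" using a by (intro mult_right_mono) auto
      finally show ?thesis .
    qed
    show "kron A B $$ (b + a*m, b + a*m) = A $$ (a,a) * B $$ (b,b)"
      using kron_index[OF A B lt lt] divmod_aux[of b m a] b by simp
  qed
  also have "\<dots> = mtrace A * mtrace B" using assms by (simp add: mtrace_def sum_product)
  finally show ?thesis .
qed

lemma kron_one: "kron (1\<^sub>m n) (1\<^sub>m m) = 1\<^sub>m (n*m)"
proof (rule eq_matI)
  fix i j assume "i < dim_row (1\<^sub>m (n*m))" "j < dim_col (1\<^sub>m (n*m))"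
  then have i: "i < n*m" and j: "j < n*m" by auto
  have m0: "m > 0" using i by (cases m) auto
  have id: "i div m < n" "j div m < n" using i j by (auto simp: less_mult_imp_div_less)
  have eq: "(i = j) = (i div m = j div m \<and> i mod m = j mod m)"
  proof
    assume "i div m = j div m \<and> i mod m = j mod m"
    then have "i div m * m + i mod m = j div m * m + j mod m" by simp
    then show "i = j" by (simp only: div_mult_mod_eq)
  qed simp
  have "kron (1\<^sub>m n) (1\<^sub>m m) $$ (i,j) = 1\<^sub>m n $$ (i div m, j div m) * 1\<^sub>m m $$ (i mod m, j mod m)"
    by (rule kron_index) (use i j in auto)
  also have "\<dots> = (if i div m = j div m then 1 else 0) * (if i mod m = j mod m then 1 else 0)"
    using id m0 by simp
  also have "\<dots> = (if i = j then 1 else 0)" using eq by simp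
  also have "\<dots> = 1\<^sub>m (n*m) $$ (i,j)" using i j by simp
  finally show "kron (1\<^sub>m n) (1\<^sub>m m) $$ (i,j) = 1\<^sub>m (n*m) $$ (i,j)" .
qed (auto simp: kron_def)

definition herm :: "complex mat \<Rightarrow> bool" where
  "herm A \<longleftrightarrow> (\<forall>i<dim_row A. \<forall>j<dim_row A. A $$ (i,j) = cnj (A $$ (j,i)))"

lemma kron_herm:
  assumes A: "A \<in> carrier_mat n n" and B: "B \<in> carrier_mat m m" and "herm A" "herm B"
  shows "herm (kron A B)"
  unfolding herm_def
proof (intro allI impI)
  fix i j assume "i < dim_row (kron A B)" "j < dim_row (kron A B)"
  then have i: "i < n*m" and j: "j < n*m" using assms by (auto simp: kron_def)
  have m0: "m > 0" using i by (cases m) auto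
  have id: "i div m < n" "j div m < n" using i j by (auto simp: less_mult_imp_div_less)
  show "kron A B $$ (i, j) = cnj (kron A B $$ (j, i))"
  proof -
    have dA: "dim_row A = n" using A by simp
    have dB: "dim_row B = m" using B by simp
    have mm: "i mod m < m" "j mod m < m" using m0 by auto
    have hA: "A $$ (i div m, j div m) = cnj (A $$ (j div m, i div m))"
      using assms(3) id unfolding herm_def dA by blast
    have hB: "B $$ (i mod m, j mod m) = cnj (B $$ (j mod m, i mod m))"
      using assms(4) mm unfolding herm_def dB by blast
    show ?thesis unfolding kron_index[OF A B i j] kron_index[OF A B j i] hA hB by simp
  qed
qed

lemma pauli1_carrier: "pauli1 k \<in> carrier_mat 2 2"
  by (simp add: pauli1_def pauli_X_def pauli_Y_def pauli_Z_def)

lemma all2: "(\<forall>i<(2::nat). P i) = (P 0 \<and> P 1)"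
  by (auto simp: numeral_2_eq_2 less_Suc_eq)

lemma lt2: "(i::nat) < 2 \<Longrightarrow> i = 0 \<or> i = 1"
  by auto

lemma herm2: "A \<in> carrier_mat 2 2 \<Longrightarrow> A $$ (0,0) = cnj (A $$ (0,0)) \<Longrightarrow> A $$ (1,1) = cnj (A $$ (1,1))
  \<Longrightarrow> A $$ (0,1) = cnj (A $$ (1,0)) \<Longrightarrow> herm A"
  unfolding herm_def by (simp only: carrier_matD all2) (metis complex_cnj_cnj)

lemma pauli1_herm: "herm (pauli1 k)"
  by (rule herm2) (auto simp: pauli1_def pauli_X_def pauli_Y_def pauli_Z_def)

lemma mat2_eqI:
  assumes "A \<in> carrier_mat 2 2" "B \<in> carrier_mat 2 2"
    "A $$ (0,0) = B $$ (0,0)" "A $$ (0,1) = B $$ (0,1)" "A $$ (1,0) = B $$ (1,0)" "A $$ (1,1) = B $$ (1,1)"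
  shows "A = B"
proof (rule eq_matI)
  fix i j assume "i < dim_row B" "j < dim_col B"
  then have "i = 0 \<or> i = 1" "j = 0 \<or> j = 1" using assms(2) by auto
  then show "A $$ (i,j) = B $$ (i,j)" using assms by auto
qed (use assms in auto)

lemma sum2: "(\<Sum>i<2::nat. f i) = f 0 + f 1"
  by (simp add: numeral_2_eq_2)

lemma mult2_index: "A \<in> carrier_mat 2 2 \<Longrightarrow> B \<in> carrier_mat 2 2 \<Longrightarrow> i < 2 \<Longrightarrow> j < 2 \<Longrightarrow>
   (A * B) $$ (i,j) = A $$ (i,0) * B $$ (0,j) + A $$ (i,1) * B $$ (1,j)"
  by (simp add: scalar_prod_def atLeast0LessThan sum2)

lemma tr2: "A \<in> carrier_mat 2 2 \<Longrightarrow> B \<in> carrier_mat 2 2 \<Longrightarrow>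
   mtrace (A * B) = A $$ (0,0) * B $$ (0,0) + A $$ (0,1) * B $$ (1,0) + A $$ (1,0) * B $$ (0,1) + A $$ (1,1) * B $$ (1,1)"
proof -
  assume a: "A \<in> carrier_mat 2 2" "B \<in> carrier_mat 2 2"
  have "mtrace (A * B) = (A * B) $$ (0,0) + (A * B) $$ (1,1)" using a by (simp add: mtrace_def sum2)
  also have "\<dots> = A $$ (0,0) * B $$ (0,0) + A $$ (0,1) * B $$ (1,0) + (A $$ (1,0) * B $$ (0,1) + A $$ (1,1) * B $$ (1,1))"
    by (simp only: mult2_index[OF a] zero_less_numeral one_less_numeral_iff semiring_norm(76))
  finally show ?thesis by (simp add: algebra_simps)
qed

lemma pauli1_sq: "pauli1 k * pauli1 k = 1\<^sub>m 2"
proof -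
  have c: "pauli1 k \<in> carrier_mat 2 2" by (rule pauli1_carrier)
  have e: "(pauli1 k * pauli1 k) $$ (i,j) = pauli1 k $$ (i,0) * pauli1 k $$ (0,j) + pauli1 k $$ (i,1) * pauli1 k $$ (1,j)"
    if "i < 2" "j < 2" for i j using mult2_index[OF c c that] .
  show ?thesis
    apply (rule mat2_eqI)
    apply (rule mult_carrier_mat[OF c c])
    apply simp
    apply (simp_all only: e zero_less_numeral one_less_numeral_iff semiring_norm(76))
    apply (auto simp: pauli1_def pauli_X_def pauli_Y_def pauli_Z_def)
    done
qed

lemma four_cases: "(a::nat) < 4 \<Longrightarrow> a = 0 \<or> a = 1 \<or> a = 2 \<or> a = 3"
  by auto

lemma pauli1_tr: "a < 4 \<Longrightarrow> b < 4 \<Longrightarrow> mtrace (pauli1 a * pauli1 b) = (if a = b then 2 else 0)"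
  apply (subst tr2[OF pauli1_carrier pauli1_carrier])
  apply (drule four_cases, drule four_cases)
  apply (elim disjE)
  apply (auto simp: pauli1_def pauli_X_def pauli_Y_def pauli_Z_def)
  done


definition sgnb :: "bool \<Rightarrow> int" where "sgnb b = (if b then 1 else -1)"

definition wk :: "nat set \<Rightarrow> (nat \<Rightarrow> bool) \<Rightarrow> nat \<Rightarrow> int" where
  "wk P x l = (\<Sum>t\<in>{t\<in>P. t<l}. sgnb (x t))"

lemma fin_bounded: "finite {t\<in>P. t < (l::nat)}"
  by (rule finite_subset[of _ "{..<l}"]) auto

lemma wk_0[simp]: "wk P x 0 = 0" by (simp add: wk_def)

lemma wk_Suc: "wk P x (Suc l) = wk P x l + (if l \<in> P then sgnb (x l) else 0)"
proof (cases "l \<in> P")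
  case True
  have "{t\<in>P. t < Suc l} = insert l {t\<in>P. t<l}" using True by auto
  then show ?thesis using True fin_bounded[of P l] by (simp add: wk_def)
next
  case False
  have "{t\<in>P. t < Suc l} = {t\<in>P. t<l}" using False by (auto simp: less_Suc_eq)
  then show ?thesis using False by (simp add: wk_def)
qed

lemma wk_upd: "wk P (x(j := b)) l = wk P x l + (if j \<in> P \<and> j < l then sgnb b - sgnb (x j) else 0)"
proof (cases "j \<in> P \<and> j < l")
  case True
  let ?S = "{t\<in>P. t<l}"
  have j: "j \<in> ?S" using True by auto
  have "wk P (x(j := b)) l = sgnb b + (\<Sum>t\<in>?S - {j}. sgnb ((x(j:=b)) t))"
    unfolding wk_def using sum.remove[OF fin_bounded j, of "\<lambda>t. sgnb ((x(j:=b)) t)"] by simp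
  also have "(\<Sum>t\<in>?S - {j}. sgnb ((x(j:=b)) t)) = (\<Sum>t\<in>?S - {j}. sgnb (x t))"
    by (rule sum.cong) auto
  also have "(\<Sum>t\<in>?S - {j}. sgnb (x t)) = wk P x l - sgnb (x j)"
    unfolding wk_def using sum.remove[OF fin_bounded j, of "\<lambda>t. sgnb (x t)"] by simp
  finally show ?thesis using True unfolding fun_upd_def by simp
next
  case False
  then have "wk P (x(j := b)) l = wk P x l" unfolding wk_def by (intro sum.cong) auto
  then show ?thesis by (subst if_not_P[OF False]) simp
qed

definition mn :: "nat set \<Rightarrow> nat \<Rightarrow> (nat \<Rightarrow> bool) \<Rightarrow> int" where
  "mn P T x = Min (wk P x ` {..T})"

definition lastmin :: "nat set \<Rightarrow> nat \<Rightarrow> (nat \<Rightarrow> bool) \<Rightarrow> nat" where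
  "lastmin P T x = Max {l. l \<le> T \<and> wk P x l = mn P T x}"

definition firstmin :: "nat set \<Rightarrow> nat \<Rightarrow> (nat \<Rightarrow> bool) \<Rightarrow> nat" where
  "firstmin P T x = Min {l. l \<le> T \<and> wk P x l = mn P T x}"

definition gstep :: "nat set \<Rightarrow> nat \<Rightarrow> (nat \<Rightarrow> bool) \<Rightarrow> (nat \<Rightarrow> bool)" where
  "gstep P T x = (if lastmin P T x < T then x(lastmin P T x := False) else x)"

definition hstep :: "nat set \<Rightarrow> nat \<Rightarrow> (nat \<Rightarrow> bool) \<Rightarrow> (nat \<Rightarrow> bool)" where
  "hstep P T x = (if 0 < firstmin P T x then x(firstmin P T x - 1 := True) else x)"

lemma mn_le: "l \<le> T \<Longrightarrow> mn P T x \<le> wk P x l"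
  unfolding mn_def by (rule Min_le) auto

lemma mn_attained: "\<exists>l\<le>T. wk P x l = mn P T x"
proof -
  have "mn P T x \<in> wk P x ` {..T}" unfolding mn_def by (rule Min_in) auto
  then show ?thesis by auto
qed

lemma mn_le0: "mn P T x \<le> 0"
  using mn_le[of 0 T P x] by simp

lemma mn_eqI: "(\<And>l. l \<le> T \<Longrightarrow> m \<le> wk P x l) \<Longrightarrow> lz \<le> T \<Longrightarrow> wk P x lz = m \<Longrightarrow> mn P T x = m"
proof -
  assume a: "\<And>l. l \<le> T \<Longrightarrow> m \<le> wk P x l" "lz \<le> T" "wk P x lz = m"
  have "Min (wk P x ` {..T}) \<le> m" using a(2,3) by (intro Min_le) auto
  moreover have "m \<le> Min (wk P x ` {..T})" using a(1) by (intro Min.boundedI) auto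
  ultimately show ?thesis unfolding mn_def by simp
qed

lemma minset_fin: "finite {l. l \<le> T \<and> wk P x l = mn P T x}" by auto
lemma minset_ne: "{l. l \<le> T \<and> wk P x l = mn P T x} \<noteq> {}" using mn_attained by auto

lemma lastmin_in: "lastmin P T x \<le> T \<and> wk P x (lastmin P T x) = mn P T x"
  using Max_in[OF minset_fin minset_ne] unfolding lastmin_def by auto

lemma lastmin_after: "lastmin P T x < l \<Longrightarrow> l \<le> T \<Longrightarrow> mn P T x < wk P x l"
proof (rule ccontr)
  assume a: "lastmin P T x < l" "l \<le> T" "\<not> mn P T x < wk P x l"
  then have "wk P x l = mn P T x" using mn_le[of l T P x] by simp
  then have "l \<le> lastmin P T x" unfolding lastmin_def using a by (intro Max_ge) auto
  then show False using a by simp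
qed

lemma firstmin_in: "firstmin P T x \<le> T \<and> wk P x (firstmin P T x) = mn P T x"
  using Min_in[OF minset_fin minset_ne] unfolding firstmin_def by auto

lemma firstmin_eqI: "lz \<le> T \<Longrightarrow> wk P x lz = mn P T x \<Longrightarrow> (\<And>l. l < lz \<Longrightarrow> wk P x l \<noteq> mn P T x) \<Longrightarrow> firstmin P T x = lz"
proof -
  assume a: "lz \<le> T" "wk P x lz = mn P T x" "\<And>l. l < lz \<Longrightarrow> wk P x l \<noteq> mn P T x"
  have "Min {l. l \<le> T \<and> wk P x l = mn P T x} \<le> lz" by (rule Min_le[OF minset_fin]) (use a in auto)
  moreover have "lz \<le> Min {l. l \<le> T \<and> wk P x l = mn P T x}"
    by (rule Min.boundedI[OF minset_fin minset_ne]) (use a(3) in \<open>auto simp: not_less[symmetric]\<close>)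
  ultimately show ?thesis unfolding firstmin_def by simp
qed

lemma lastmin_step:
  assumes "lastmin P T x < T"
  shows "lastmin P T x \<in> P \<and> x (lastmin P T x)"
proof -
  let ?l = "lastmin P T x"
  have "mn P T x < wk P x (Suc ?l)" using assms by (intro lastmin_after) auto
  moreover have "wk P x ?l = mn P T x" using lastmin_in by blast
  ultimately show ?thesis using wk_Suc[of P x ?l] by (auto simp: sgnb_def split: if_splits)
qed

lemma lastmin_lt_iff: "lastmin P T x < T \<longleftrightarrow> mn P T x < wk P x T"
proof
  assume "lastmin P T x < T" then show "mn P T x < wk P x T" by (intro lastmin_after) auto
next
  assume a: "mn P T x < wk P x T"
  have "lastmin P T x \<noteq> T" using a lastmin_in[of P T x] by auto
  then show "lastmin P T x < T" using lastmin_in[of P T x] by auto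
qed

lemma gstep_changes: "{t. gstep P T x t \<noteq> x t} \<subseteq> {t. t \<in> P \<and> t < T}"
  using lastmin_step[of P T x] by (auto simp: gstep_def split: if_splits)

lemma gstep_changes_card: "card {t. gstep P T x t \<noteq> x t} \<le> 1"
proof -
  have "{t. gstep P T x t \<noteq> x t} \<subseteq> {lastmin P T x}" by (auto simp: gstep_def split: if_splits)
  then have "card {t. gstep P T x t \<noteq> x t} \<le> card {lastmin P T x}" by (intro card_mono) auto
  then show ?thesis by simp
qed

lemma gstep_main:
  assumes lt: "mn P T x < wk P x T"
  shows "wk P (gstep P T x) T = wk P x T - 2"
    and "mn P T (gstep P T x) = mn P T x - 1"
    and "hstep P T (gstep P T x) = x"
proof -
  let ?l = "lastmin P T x"
  have lT: "?l < T" using lt lastmin_lt_iff by blast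
  have st: "?l \<in> P" "x ?l" using lastmin_step[OF lT] by auto
  have g: "gstep P T x = x(?l := False)" using lT by (simp add: gstep_def)
  have wkg: "wk P (gstep P T x) l = wk P x l - (if ?l < l then 2 else 0)" for l
    unfolding g wk_upd using st by (simp add: sgnb_def)
  show "wk P (gstep P T x) T = wk P x T - 2" using wkg[of T] lT by simp
  have m: "wk P x ?l = mn P T x" using lastmin_in by blast
  have s1: "wk P x (Suc ?l) = mn P T x + 1" using wk_Suc[of P x ?l] st m by (simp add: sgnb_def)
  have mg: "mn P T (gstep P T x) = mn P T x - 1"
  proof (rule mn_eqI[where lz = "Suc (lastmin P T x)"])
    fix l assume l: "l \<le> T"
    show "mn P T x - 1 \<le> wk P (gstep P T x) l"
    proof (cases "?l < l")
      case True
      then have "mn P T x < wk P x l" using l by (intro lastmin_after) auto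
      then show ?thesis using wkg[of l] True by simp
    next
      case False
      then show ?thesis using wkg[of l] mn_le[OF l, of P x] by simp
    qed
  next
    show "Suc ?l \<le> T" using lT by simp
    show "wk P (gstep P T x) (Suc ?l) = mn P T x - 1" using wkg[of "Suc ?l"] s1 by simp
  qed
  then show "mn P T (gstep P T x) = mn P T x - 1" .
  have fm: "firstmin P T (gstep P T x) = Suc ?l"
  proof (rule firstmin_eqI)
    show "Suc ?l \<le> T" using lT by simp
    show "wk P (gstep P T x) (Suc ?l) = mn P T (gstep P T x)" using wkg[of "Suc ?l"] s1 mg by simp
    fix l assume "l < Suc ?l"
    then have "l \<le> ?l" by simp
    moreover have "?l \<le> T" using lT by simp
    ultimately have "mn P T x \<le> wk P x l" using mn_le[of l T P x] by simp
    then show "wk P (gstep P T x) l \<noteq> mn P T (gstep P T x)" using wkg[of l] \<open>l \<le> ?l\<close> mg by simp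
  qed
  show "hstep P T (gstep P T x) = x"
    unfolding hstep_def fm using st g by (auto simp: fun_eq_iff)
qed

lemma iter_main:
  "int j \<le> wk P x T - mn P T x \<Longrightarrow>
     wk P ((gstep P T ^^ j) x) T = wk P x T - 2 * int j \<and>
     mn P T ((gstep P T ^^ j) x) = mn P T x - int j \<and>
     (hstep P T ^^ j) ((gstep P T ^^ j) x) = x"
proof (induction j)
  case 0 then show ?case by simp
next
  case (Suc j)
  let ?z = "(gstep P T ^^ j) x"
  have IH: "wk P ?z T = wk P x T - 2 * int j" "mn P T ?z = mn P T x - int j"
       "(hstep P T ^^ j) ?z = x" using Suc by auto
  have lt: "mn P T ?z < wk P ?z T" using IH Suc.prems by simp
  note gm = gstep_main[OF lt]
  have e: "(gstep P T ^^ Suc j) x = gstep P T ?z" by simp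
  have "(hstep P T ^^ Suc j) (gstep P T ?z) = (hstep P T ^^ j) (hstep P T (gstep P T ?z))"
    by (simp add: funpow_Suc_right del: funpow.simps)
  then show ?case unfolding e using gm IH by simp
qed

lemma iter_changes: "{t. (gstep P T ^^ j) x t \<noteq> x t} \<subseteq> {t. t \<in> P \<and> t < T} \<and>
   card {t. (gstep P T ^^ j) x t \<noteq> x t} \<le> j"
proof (induction j)
  case 0 then show ?case by simp
next
  case (Suc j)
  let ?z = "(gstep P T ^^ j) x"
  have e: "(gstep P T ^^ Suc j) x = gstep P T ?z" by simp
  have A: "{t. gstep P T ?z t \<noteq> ?z t} \<subseteq> {t. t \<in> P \<and> t < T}" by (rule gstep_changes)
  have B: "{t. ?z t \<noteq> x t} \<subseteq> {t. t \<in> P \<and> t < T}" using Suc.IH by (rule conjunct1)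
  have Bc: "card {t. ?z t \<noteq> x t} \<le> j" using Suc.IH by (rule conjunct2)
  have fin: "finite {t. t \<in> P \<and> t < T}" by (rule finite_subset[of _ "{..<T}"]) auto
  have sub: "{t. gstep P T ?z t \<noteq> x t} \<subseteq> {t. gstep P T ?z t \<noteq> ?z t} \<union> {t. ?z t \<noteq> x t}" by blast
  have fin1: "finite {t. gstep P T ?z t \<noteq> ?z t}" by (rule finite_subset[OF A fin])
  have fin2: "finite {t. ?z t \<noteq> x t}" by (rule finite_subset[OF B fin])
  have "card {t. gstep P T ?z t \<noteq> x t} \<le> card ({t. gstep P T ?z t \<noteq> ?z t} \<union> {t. ?z t \<noteq> x t})"
    by (rule card_mono[OF _ sub]) (use fin1 fin2 in blast)
  also have "\<dots> \<le> card {t. gstep P T ?z t \<noteq> ?z t} + card {t. ?z t \<noteq> x t}" by (rule card_Un_le)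
  also have "\<dots> \<le> 1 + j" using gstep_changes_card[of P T ?z] Bc by linarith
  finally have c: "card {t. gstep P T ?z t \<noteq> x t} \<le> Suc j" by simp
  have s: "{t. gstep P T ?z t \<noteq> x t} \<subseteq> {t. t \<in> P \<and> t < T}" using sub A B by blast
  show ?case unfolding e using c s by blast
qed


lemma pobs_Cons: "pauli_obs (k # p) = kron (pauli1 k) (pauli_obs p)"
  by (simp add: pauli_obs_def)

lemma pobs_carrier: "pauli_obs p \<in> carrier_mat (2 ^ length p) (2 ^ length p)"
proof (induction p)
  case Nil then show ?case by (simp add: pauli_obs_def)
next
  case (Cons k p)
  show ?case unfolding pobs_Cons using kron_carrier[OF pauli1_carrier Cons] by simp
qed

lemma pobs_herm: "herm (pauli_obs p)"
proof (induction p)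
  case Nil then show ?case by (simp add: pauli_obs_def herm_def)
next
  case (Cons k p)
  show ?case unfolding pobs_Cons by (rule kron_herm[OF pauli1_carrier pobs_carrier pauli1_herm Cons])
qed

lemma pobs_sq: "pauli_obs p * pauli_obs p = 1\<^sub>m (2 ^ length p)"
proof (induction p)
  case Nil then show ?case by (simp add: pauli_obs_def)
next
  case (Cons k p)
  have "pauli_obs (k # p) * pauli_obs (k # p) = kron (pauli1 k * pauli1 k) (pauli_obs p * pauli_obs p)"
    unfolding pobs_Cons by (rule kron_mult[OF pauli1_carrier pauli1_carrier pobs_carrier pobs_carrier])
  also have "\<dots> = 1\<^sub>m (2 ^ length (k # p))" using Cons pauli1_sq kron_one by simp
  finally show ?case .
qed

lemma pobs_tr: "length p = length q \<Longrightarrow> (\<forall>k\<in>set p. k < 4) \<Longrightarrow> (\<forall>k\<in>set q. k < 4) \<Longrightarrow>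
  mtrace (pauli_obs p * pauli_obs q) = (if p = q then 2 ^ length p else 0)"
proof (induction p arbitrary: q)
  case Nil then show ?case by (simp add: pauli_obs_def mtrace_def)
next
  case (Cons a p)
  obtain b q' where q: "q = b # q'" using Cons.prems(1) by (cases q) auto
  have len: "length p = length q'" using Cons.prems(1) q by simp
  have ab: "a < 4" "b < 4" using Cons.prems q by auto
  have "mtrace (pauli_obs (a # p) * pauli_obs q) = mtrace (kron (pauli1 a * pauli1 b) (pauli_obs p * pauli_obs q'))"
    unfolding q pobs_Cons
    by (subst kron_mult[OF pauli1_carrier pauli1_carrier pobs_carrier]) (use len pobs_carrier[of q'] in simp_all)
  also have "\<dots> = mtrace (pauli1 a * pauli1 b) * mtrace (pauli_obs p * pauli_obs q')"
    by (rule kron_trace[OF mult_carrier_mat[OF pauli1_carrier pauli1_carrier]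
          mult_carrier_mat[OF pobs_carrier]]) (use len pobs_carrier[of q'] in simp)
  also have "\<dots> = (if a = b then 2 else 0) * (if p = q' then 2 ^ length p else 0)"
    using pauli1_tr[OF ab] Cons.IH[OF len] Cons.prems q by simp
  also have "\<dots> = (if a # p = q then 2 ^ length (a # p) else 0)" using q by simp
  finally show ?case .
qed

lemma pobs_replicate: "pauli_obs (replicate n 0) = 1\<^sub>m (2 ^ n)"
proof (induction n)
  case 0 then show ?case by (simp add: pauli_obs_def)
next
  case (Suc n)
  have "pauli_obs (replicate (Suc n) 0) = kron (1\<^sub>m 2) (1\<^sub>m (2^n))"
    using Suc by (simp add: pobs_Cons pauli1_def)
  also have "\<dots> = 1\<^sub>m (2 ^ Suc n)" by (simp add: kron_one)
  finally show ?case .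
qed

lemma pobs_tr1: "length p = n \<Longrightarrow> (\<forall>k\<in>set p. k < 4) \<Longrightarrow> p \<noteq> replicate n 0 \<Longrightarrow> mtrace (pauli_obs p) = 0"
proof -
  assume a: "length p = n" "\<forall>k\<in>set p. k < 4" "p \<noteq> replicate n 0"
  have "mtrace (pauli_obs p) = mtrace (pauli_obs p * pauli_obs (replicate n 0))"
    unfolding pobs_replicate using pobs_carrier[of p] a(1) by simp
  also have "\<dots> = 0" using pobs_tr[of p "replicate n 0"] a by simp
  finally show ?thesis .
qed


definition rho :: "nat \<Rightarrow> real \<Rightarrow> complex mat \<Rightarrow> complex mat" where
  "rho d \<delta> Om = Matrix.mat d d (\<lambda>(i,j). ((if i = j then 1 else 0) + complex_of_real \<delta> * Om $$ (i,j)) / of_nat d)"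

lemma tr_mult: "A \<in> carrier_mat d d \<Longrightarrow> B \<in> carrier_mat d d \<Longrightarrow>
  mtrace (A * B) = (\<Sum>i<d. \<Sum>l<d. A $$ (i,l) * B $$ (l,i))"
  by (simp add: mtrace_def scalar_prod_def atLeast0LessThan)

definition cmb :: "nat \<Rightarrow> complex \<Rightarrow> complex \<Rightarrow> complex mat \<Rightarrow> complex mat" where
  "cmb d a b X = Matrix.mat d d (\<lambda>(i,j). a * (if i = j then 1 else 0) + b * X $$ (i,j))"

lemma cmb_carrier: "cmb d a b X \<in> carrier_mat d d" by (simp add: cmb_def)

lemma tr_cmb:
  assumes X: "X \<in> carrier_mat d d" and Y: "Y \<in> carrier_mat d d"
  shows "mtrace (cmb d a b X * cmb d c e Y) = a * c * of_nat d + a * e * mtrace Y + b * c * mtrace X + b * e * mtrace (X * Y)"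
proof -
  have "mtrace (cmb d a b X * cmb d c e Y) =
     (\<Sum>i<d. \<Sum>l<d. (a * (if i = l then 1 else 0) + b * X $$ (i,l)) * (c * (if l = i then 1 else 0) + e * Y $$ (l,i)))"
    unfolding tr_mult[OF cmb_carrier cmb_carrier] by (intro sum.cong refl) (auto simp: cmb_def)
  also have "\<dots> = (\<Sum>i<d. \<Sum>l<d. (if i = l then a * c + a * e * Y $$ (i,i) + b * c * X $$ (i,i) else 0) + b * e * (X $$ (i,l) * Y $$ (l,i)))"
    by (intro sum.cong refl) (auto simp: algebra_simps)
  also have "\<dots> = (\<Sum>i<d. (a * c + a * e * Y $$ (i,i) + b * c * X $$ (i,i)) + b * e * (\<Sum>l<d. X $$ (i,l) * Y $$ (l,i)))"
    by (simp add: sum.distrib sum_distrib_left)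
  also have "\<dots> = a * c * of_nat d + a * e * (\<Sum>i<d. Y $$ (i,i)) + b * c * (\<Sum>i<d. X $$ (i,i)) + b * e * (\<Sum>i<d. \<Sum>l<d. X $$ (i,l) * Y $$ (l,i))"
    by (simp add: sum.distrib sum_distrib_left)
  also have "\<dots> = a * c * of_nat d + a * e * mtrace Y + b * c * mtrace X + b * e * mtrace (X * Y)"
  proof -
    have "mtrace X = (\<Sum>i<d. X $$ (i,i))" "mtrace Y = (\<Sum>i<d. Y $$ (i,i))" using X Y by (simp_all add: mtrace_def)
    then show ?thesis unfolding tr_mult[OF X Y] by simp
  qed
  finally show ?thesis .
qed

lemma meas_proj_cmb: "Q \<in> carrier_mat d d \<Longrightarrow> meas_proj Q b = cmb d (1/2) (if b then 1/2 else -1/2) Q"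
  by (intro eq_matI) (auto simp: meas_proj_def cmb_def)

lemma rho_cmb: "Om \<in> carrier_mat d d \<Longrightarrow> rho d \<delta> Om = cmb d (1 / of_nat d) (complex_of_real \<delta> / of_nat d) Om"
  by (intro eq_matI) (auto simp: rho_def cmb_def add_divide_distrib)

lemma born_rho:
  assumes Q: "Q \<in> carrier_mat d d" and Om: "Om \<in> carrier_mat d d" and d: "d > 0"
    and t1: "mtrace Q = 0" and t2: "mtrace Om = 0" and t3: "mtrace (Q * Om) = complex_of_real \<tau> * of_nat d"
  shows "born_prob Q (rho d \<delta> Om) True = (1 + \<delta> * \<tau>) / 2"
proof -
  have "mtrace (meas_proj Q True * rho d \<delta> Om) = 1/2 * (1 / of_nat d) * of_nat d + 1/2 * (complex_of_real \<delta> / of_nat d) * mtrace Om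
     + 1/2 * (1/of_nat d) * mtrace Q + 1/2 * (complex_of_real \<delta> / of_nat d) * mtrace (Q * Om)"
    unfolding meas_proj_cmb[OF Q] rho_cmb[OF Om] by (simp add: tr_cmb[OF Q Om])
  also have "\<dots> = complex_of_real ((1 + \<delta> * \<tau>) / 2)"
    unfolding t1 t2 t3 using d by (simp add: field_simps)
  finally have "mtrace (meas_proj Q True * rho d \<delta> Om) = complex_of_real ((1 + \<delta> * \<tau>) / 2)" .
  then show ?thesis unfolding born_prob_def by (simp only: Re_complex_of_real)
qed

lemma expval_rho:
  assumes Q: "Q \<in> carrier_mat d d" and Om: "Om \<in> carrier_mat d d" and d: "d > 0"
    and t1: "mtrace Q = 0" and t3: "mtrace (Q * Om) = complex_of_real \<tau> * of_nat d"
  shows "expval Q (rho d \<delta> Om) = \<delta> * \<tau>"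
proof -
  have q: "Q = cmb d 0 1 Q" by (intro eq_matI) (use Q in \<open>auto simp: cmb_def\<close>)
  have "mtrace (Q * rho d \<delta> Om) = 0 * (1 / of_nat d) * of_nat d + 0 * (complex_of_real \<delta> / of_nat d) * mtrace Om
     + 1 * (1/of_nat d) * mtrace Q + 1 * (complex_of_real \<delta> / of_nat d) * mtrace (Q * Om)"
    unfolding rho_cmb[OF Om] by (subst q) (simp add: tr_cmb[OF Q Om])
  also have "\<dots> = complex_of_real (\<delta> * \<tau>)"
    unfolding t1 t3 using d by (simp add: field_simps)
  finally have "mtrace (Q * rho d \<delta> Om) = complex_of_real (\<delta> * \<tau>)" .
  then show ?thesis unfolding expval_def by (simp only: Re_complex_of_real)
qed


lemma re_cnj_sq: "0 \<le> Re (cnj z * z)"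
proof -
  have "Re (cnj z * z) = (Re z)^2 + (Im z)^2" by (simp add: power2_eq_square)
  then show ?thesis by simp
qed

lemma psd_aux:
  fixes Om :: "complex mat" and v :: "nat \<Rightarrow> complex"
  assumes Om: "Om \<in> carrier_mat d d" and h: "herm Om" and sq: "Om * Om = 1\<^sub>m d"
  shows "\<bar>Re (\<Sum>i<d. \<Sum>j<d. cnj (v i) * Om $$ (i,j) * v j)\<bar> \<le> Re (\<Sum>i<d. cnj (v i) * v i)"
proof -
  define w where "w l = (\<Sum>j<d. Om $$ (l,j) * v j)" for l
  define Q where "Q = (\<Sum>i<d. \<Sum>j<d. cnj (v i) * Om $$ (i,j) * v j)"
  define nv where "nv = (\<Sum>i<d. cnj (v i) * v i)"
  have dR: "dim_row Om = d" using Om by simp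
  have h': "Om $$ (i,j) = cnj (Om $$ (j,i))" if "i<d" "j<d" for i j
    using h that unfolding herm_def dR by blast
  have sqe: "(\<Sum>l<d. Om $$ (i,l) * Om $$ (l,j)) = (if i = j then 1 else 0)" if "i<d" "j<d" for i j
  proof -
    have "(Om * Om) $$ (i,j) = (\<Sum>l<d. Om $$ (i,l) * Om $$ (l,j))"
      using Om that by (simp add: scalar_prod_def atLeast0LessThan)
    then show ?thesis using sq that by simp
  qed
  have e1: "(\<Sum>l<d. cnj (v l) * w l) = Q" unfolding w_def Q_def by (simp add: sum_distrib_left mult.assoc)
  have cw: "cnj (w l) = (\<Sum>i<d. Om $$ (i,l) * cnj (v i))" if "l<d" for l
  proof -
    have "cnj (w l) = (\<Sum>i<d. cnj (Om $$ (l,i)) * cnj (v i))" unfolding w_def by (simp add: cnj_sum)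
    also have "\<dots> = (\<Sum>i<d. Om $$ (i,l) * cnj (v i))"
    proof (rule sum.cong[OF refl])
      fix i assume "i \<in> {..<d}"
      then have "Om $$ (i,l) = cnj (Om $$ (l,i))" using h' that by blast
      then show "cnj (Om $$ (l,i)) * cnj (v i) = Om $$ (i,l) * cnj (v i)" by simp
    qed
    finally show ?thesis .
  qed
  have e2: "(\<Sum>l<d. cnj (w l) * w l) = nv"
  proof -
    have "(\<Sum>l<d. cnj (w l) * w l) = (\<Sum>l<d. (\<Sum>i<d. Om $$ (i,l) * cnj (v i)) * (\<Sum>j<d. Om $$ (l,j) * v j))"
    proof (rule sum.cong[OF refl])
      fix l assume l: "l \<in> {..<d}"
      have "cnj (w l) * w l = (\<Sum>i<d. Om $$ (i,l) * cnj (v i)) * w l" using cw l by simp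
      then show "cnj (w l) * w l = (\<Sum>i<d. Om $$ (i,l) * cnj (v i)) * (\<Sum>j<d. Om $$ (l,j) * v j)"
        by (simp only: w_def)
    qed
    also have "\<dots> = (\<Sum>l<d. \<Sum>i<d. \<Sum>j<d. cnj (v i) * (Om $$ (i,l) * Om $$ (l,j)) * v j)"
      by (simp add: sum_product mult_ac) (rule sum.cong[OF refl], rule sum.swap)
    also have "\<dots> = (\<Sum>i<d. \<Sum>l<d. \<Sum>j<d. cnj (v i) * (Om $$ (i,l) * Om $$ (l,j)) * v j)"
      by (rule sum.swap)
    also have "\<dots> = (\<Sum>i<d. \<Sum>j<d. \<Sum>l<d. cnj (v i) * (Om $$ (i,l) * Om $$ (l,j)) * v j)"
      by (intro sum.cong refl sum.swap)
    also have "\<dots> = (\<Sum>i<d. \<Sum>j<d. cnj (v i) * (\<Sum>l<d. Om $$ (i,l) * Om $$ (l,j)) * v j)"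
      by (simp add: sum_distrib_left sum_distrib_right)
    also have "\<dots> = (\<Sum>i<d. \<Sum>j<d. if i = j then cnj (v i) * v i else 0)"
      by (intro sum.cong refl) (simp add: sqe)
    also have "\<dots> = nv" unfolding nv_def by simp
    finally show ?thesis .
  qed
  have e3: "(\<Sum>l<d. cnj (w l) * v l) = cnj Q"
    unfolding e1[symmetric] by (simp add: cnj_sum mult.commute)
  have key: "0 \<le> 2 * Re nv + 2 * s * Re Q" if s: "s * s = 1" for s :: real
  proof -
    have "0 \<le> Re (\<Sum>l<d. cnj (v l + of_real s * w l) * (v l + of_real s * w l))"
      by (simp only: Re_sum) (intro sum_nonneg re_cnj_sq)
    also have "(\<Sum>l<d. cnj (v l + of_real s * w l) * (v l + of_real s * w l)) =
       (\<Sum>l<d. cnj (v l) * v l) + of_real s * (\<Sum>l<d. cnj (v l) * w l) + of_real s * (\<Sum>l<d. cnj (w l) * v l)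
        + of_real (s * s) * (\<Sum>l<d. cnj (w l) * w l)"
      by (simp add: sum.distrib sum_distrib_left algebra_simps)
    also have "\<dots> = nv + of_real s * Q + of_real s * cnj Q + nv"
      unfolding e1 e2 e3 nv_def s by simp
    also have "Re \<dots> = 2 * Re nv + 2 * s * Re Q" by simp
    finally show ?thesis .
  qed
  have "0 \<le> 2 * Re nv + 2 * Re Q" using key[of 1] by simp
  moreover have "0 \<le> 2 * Re nv - 2 * Re Q" using key[of "-1"] by simp
  ultimately show ?thesis unfolding Q_def[symmetric] nv_def[symmetric] by linarith
qed

lemma rho_density:
  assumes Om: "Om \<in> carrier_mat d d" and h: "herm Om" and sq: "Om * Om = 1\<^sub>m d"
    and tr: "mtrace Om = 0" and d: "d > 0" and dl: "\<bar>\<delta>\<bar> \<le> 1"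
  shows "density_matrix d (rho d \<delta> Om)"
  unfolding density_matrix_def
proof (intro conjI allI impI)
  show "rho d \<delta> Om \<in> carrier_mat d d" by (simp add: rho_def)
  have dR: "dim_row Om = d" using Om by simp
  have h': "Om $$ (i,j) = cnj (Om $$ (j,i))" if "i<d" "j<d" for i j
    using h that unfolding herm_def dR by blast
  fix i j assume ij: "i < d" "j < d"
  show "rho d \<delta> Om $$ (i, j) = cnj (rho d \<delta> Om $$ (j, i))"
    using ij h'[OF ij] by (simp add: rho_def)
next
  fix v :: "nat \<Rightarrow> complex"
  define Q where "Q = (\<Sum>i<d. \<Sum>j<d. cnj (v i) * Om $$ (i,j) * v j)"
  define nv where "nv = (\<Sum>i<d. cnj (v i) * v i)"
  have "(\<Sum>i<d. \<Sum>j<d. cnj (v i) * rho d \<delta> Om $$ (i, j) * v j)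
     = (\<Sum>i<d. \<Sum>j<d. (if i = j then cnj (v i) * v i else 0) / of_nat d + complex_of_real \<delta> / of_nat d * (cnj (v i) * Om $$ (i,j) * v j))"
    by (intro sum.cong refl) (auto simp: rho_def field_simps)
  also have "\<dots> = nv / of_nat d + complex_of_real \<delta> / of_nat d * Q"
    unfolding nv_def Q_def by (simp add: sum.distrib sum_distrib_left sum_divide_distrib[symmetric])
  finally have eq: "(\<Sum>i<d. \<Sum>j<d. cnj (v i) * rho d \<delta> Om $$ (i, j) * v j) = nv / of_nat d + complex_of_real \<delta> / of_nat d * Q" .
  have a: "\<bar>Re Q\<bar> \<le> Re nv" unfolding Q_def nv_def by (rule psd_aux[OF Om h sq])
  have "\<bar>\<delta>\<bar> * \<bar>Re Q\<bar> \<le> 1 * \<bar>Re Q\<bar>" by (rule mult_right_mono[OF dl abs_ge_zero])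
  then have "\<bar>\<delta> * Re Q\<bar> \<le> Re nv" using a by (simp add: abs_mult)
  then have "0 \<le> Re nv + \<delta> * Re Q" by linarith
  then have "0 \<le> (Re nv + \<delta> * Re Q) / d" using d by simp
  then show "0 \<le> Re (\<Sum>i<d. \<Sum>j<d. cnj (v i) * rho d \<delta> Om $$ (i, j) * v j)"
    unfolding eq by (simp add: add_divide_distrib)
next
  have "mtrace (rho d \<delta> Om) = (\<Sum>i<d. (1 + complex_of_real \<delta> * Om $$ (i,i)) / of_nat d)"
    by (simp add: mtrace_def rho_def)
  also have "\<dots> = (of_nat d + complex_of_real \<delta> * mtrace Om) / of_nat d"
    using Om by (simp add: mtrace_def sum_divide_distrib[symmetric] sum.distrib sum_distrib_left)
  also have "\<dots> = 1" using tr d by simp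
  finally show "mtrace (rho d \<delta> Om) = 1" .
qed


definition XT :: "nat \<Rightarrow> (nat \<Rightarrow> bool) set" where "XT T = {x. \<forall>t. t \<notin> {..<T} \<longrightarrow> x t = False}"

lemma XT_eq: "XT T = PiE_dflt {..<T} False (\<lambda>_. UNIV)" by (auto simp: XT_def PiE_dflt_def)
lemma finite_XT: "finite (XT T)" unfolding XT_eq by (rule finite_PiE_dflt) auto

definition PB :: "nat \<Rightarrow> (nat \<Rightarrow> real) \<Rightarrow> (nat \<Rightarrow> bool) pmf" where
  "PB T \<beta> = Pi_pmf {..<T} False (\<lambda>t. bernoulli_pmf (\<beta> t))"

lemma set_PB: "set_pmf (PB T \<beta>) \<subseteq> XT T"
  unfolding PB_def XT_def using set_Pi_pmf_subset[of "{..<T}" False] by auto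

lemma prob_PB: "measure_pmf.prob (PB T \<beta>) Y = (\<Sum>x\<in>Y \<inter> XT T. pmf (PB T \<beta>) x)"
proof -
  have "measure_pmf.prob (PB T \<beta>) Y = measure_pmf.prob (PB T \<beta>) (Y \<inter> set_pmf (PB T \<beta>))"
    by (simp add: measure_Int_set_pmf)
  also have "Y \<inter> set_pmf (PB T \<beta>) = (Y \<inter> XT T) \<inter> set_pmf (PB T \<beta>)" using set_PB by blast
  also have "measure_pmf.prob (PB T \<beta>) \<dots> = measure_pmf.prob (PB T \<beta>) (Y \<inter> XT T)"
    by (simp add: measure_Int_set_pmf)
  also have "\<dots> = sum (pmf (PB T \<beta>)) (Y \<inter> XT T)"
    by (rule measure_measure_pmf_finite) (use finite_XT in auto)
  finally show ?thesis .
qed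

definition bw :: "real \<Rightarrow> bool \<Rightarrow> real" where "bw p b = (if b then p else 1 - p)"

lemma pmf_PB:
  assumes \<beta>: "\<And>t. 0 \<le> \<beta> t \<and> \<beta> t \<le> 1" and x: "x \<in> XT T"
  shows "pmf (PB T \<beta>) x = (\<Prod>t<T. bw (\<beta> t) (x t))"
proof -
  have "pmf (PB T \<beta>) x = (\<Prod>t\<in>{..<T}. pmf (bernoulli_pmf (\<beta> t)) (x t))"
    unfolding PB_def by (rule pmf_Pi') (use x in \<open>auto simp: XT_def\<close>)
  also have "\<dots> = (\<Prod>t<T. bw (\<beta> t) (x t))"
  proof (rule prod.cong[OF refl])
    fix t
    have "0 \<le> \<beta> t" "\<beta> t \<le> 1" using \<beta> by auto
    then show "pmf (bernoulli_pmf (\<beta> t)) (x t) = bw (\<beta> t) (x t)"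
      by (cases "x t") (simp_all add: bw_def pmf_bernoulli_True pmf_bernoulli_False)
  qed
  finally show ?thesis .
qed

definition npos :: "nat set \<Rightarrow> (nat \<Rightarrow> bool) \<Rightarrow> nat" where "npos P x = card {t\<in>P. x t}"
definition nneg :: "nat set \<Rightarrow> (nat \<Rightarrow> bool) \<Rightarrow> nat" where "nneg P x = card {t\<in>P. \<not> x t}"

lemma finP: "(P::nat set) \<subseteq> {..<T} \<Longrightarrow> finite P" by (erule finite_subset) (rule finite_lessThan)

lemma npos_nneg: "finite P \<Longrightarrow> npos P x + nneg P x = card P"
proof -
  assume f: "finite P"
  have "P = {t\<in>P. x t} \<union> {t\<in>P. \<not> x t}" by auto
  then have "card P = card ({t\<in>P. x t} \<union> {t\<in>P. \<not> x t})" by simp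
  also have "\<dots> = npos P x + nneg P x" unfolding npos_def nneg_def
    by (rule card_Un_disjoint) (use f in auto)
  finally show ?thesis by simp
qed

lemma wk_T: "P \<subseteq> {..<T} \<Longrightarrow> wk P x T = int (npos P x) - int (nneg P x)"
proof -
  assume P: "P \<subseteq> {..<T}"
  have f: "finite P" using P by (rule finP)
  have e: "{t\<in>P. t<T} = P" using P by auto
  have "wk P x T = (\<Sum>t\<in>P. if x t then 1 else - 1)" unfolding wk_def e sgnb_def by simp
  also have "\<dots> = (\<Sum>t\<in>P \<inter> {t. x t}. 1) + (\<Sum>t\<in>P \<inter> - {t. x t}. - 1)"
    by (rule sum.If_cases[OF f])
  also have "P \<inter> {t. x t} = {t\<in>P. x t}" by auto
  also have "P \<inter> - {t. x t} = {t\<in>P. \<not> x t}" by auto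
  finally show ?thesis by (simp add: npos_def nneg_def)
qed

definition bf :: "nat set \<Rightarrow> real \<Rightarrow> nat \<Rightarrow> real" where "bf P a t = (if t \<in> P then a else 1/2)"

lemma bf_range: "0 \<le> a \<Longrightarrow> a \<le> 1 \<Longrightarrow> 0 \<le> bf P a t \<and> bf P a t \<le> 1" by (simp add: bf_def)

lemma pmf_bf:
  assumes P: "P \<subseteq> {..<T}" and a: "0 \<le> a" "a \<le> 1" and x: "x \<in> XT T"
  shows "pmf (PB T (bf P a)) x = a ^ npos P x * (1 - a) ^ nneg P x * (1/2) ^ (T - card P)"
proof -
  have f: "finite P" using P by (rule finP)
  have "pmf (PB T (bf P a)) x = (\<Prod>t<T. bw (bf P a t) (x t))"
    by (rule pmf_PB[OF _ x]) (use bf_range[OF a] in auto)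
  also have "\<dots> = (\<Prod>t\<in>{..<T} - P. bw (bf P a t) (x t)) * (\<Prod>t\<in>P. bw (bf P a t) (x t))"
    by (rule prod.subset_diff[OF P]) simp
  also have "(\<Prod>t\<in>{..<T} - P. bw (bf P a t) (x t)) = (\<Prod>t\<in>{..<T} - P. 1/2)"
    by (rule prod.cong) (auto simp: bf_def bw_def)
  also have "\<dots> = (1/2) ^ (T - card P)" using P f by (simp add: card_Diff_subset)
  also have "(\<Prod>t\<in>P. bw (bf P a t) (x t)) = (\<Prod>t\<in>P. if x t then a else 1 - a)"
    by (rule prod.cong) (auto simp: bf_def bw_def)
  also have "\<dots> = (\<Prod>t\<in>P \<inter> {t. x t}. a) * (\<Prod>t\<in>P \<inter> - {t. x t}. 1 - a)"
    by (rule prod.If_cases[OF f])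
  also have "\<dots> = a ^ npos P x * (1 - a) ^ nneg P x"
  proof -
    have "P \<inter> {t. x t} = {t\<in>P. x t}" "P \<inter> - {t. x t} = {t\<in>P. \<not> x t}" by auto
    then show ?thesis by (simp add: npos_def nneg_def)
  qed
  finally show ?thesis by simp
qed

lemma pmf_relation:
  assumes P: "P \<subseteq> {..<T}" and a: "0 \<le> a" "a \<le> 1" and x: "x \<in> XT T" and y: "y \<in> XT T"
    and w: "wk P y T = - wk P x T"
  shows "pmf (PB T (bf P a)) y = pmf (PB T (bf P (1 - a))) x"
proof -
  have f: "finite P" using P by (rule finP)
  have s1: "npos P x + nneg P x = card P" "npos P y + nneg P y = card P" using npos_nneg[OF f] by auto
  have d: "int (npos P y) - int (nneg P y) = - (int (npos P x) - int (nneg P x))"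
    using w wk_T[OF P, of x] wk_T[OF P, of y] by simp
  have e: "npos P y = nneg P x" "nneg P y = npos P x" using s1 d by linarith+
  have a': "0 \<le> 1 - a" "1 - a \<le> 1" using a by auto
  show ?thesis unfolding pmf_bf[OF P a y] pmf_bf[OF P a' x] e by simp
qed

definition Lv :: "nat set \<Rightarrow> nat \<Rightarrow> int \<Rightarrow> (nat \<Rightarrow> bool) set" where
  "Lv P T w = {x \<in> XT T. wk P x T = w}"

definition cp :: "nat set \<Rightarrow> (nat \<Rightarrow> bool) \<Rightarrow> (nat \<Rightarrow> bool)" where
  "cp P x = (\<lambda>t. if t \<in> P then \<not> x t else x t)"

lemma wk_cp: "wk P (cp P x) l = - wk P x l"
proof -
  have "wk P (cp P x) l = (\<Sum>t\<in>{t\<in>P. t<l}. - sgnb (x t))"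
    unfolding wk_def by (rule sum.cong) (auto simp: cp_def sgnb_def)
  then show ?thesis by (simp add: wk_def sum_negf)
qed

lemma cp_cp: "cp P (cp P x) = x" by (auto simp: cp_def)

lemma cp_XT: "P \<subseteq> {..<T} \<Longrightarrow> x \<in> XT T \<Longrightarrow> cp P x \<in> XT T" by (auto simp: cp_def XT_def)

lemma finite_Lv: "finite (Lv P T w)" unfolding Lv_def using finite_XT by simp

lemma card_Lv: "P \<subseteq> {..<T} \<Longrightarrow> card (Lv P T w) = card (Lv P T (- w))"
proof -
  assume P: "P \<subseteq> {..<T}"
  have "bij_betw (cp P) (Lv P T w) (Lv P T (- w))"
    by (rule bij_betw_byWitness[where f' = "cp P"]) (auto simp: Lv_def cp_cp wk_cp cp_XT[OF P])
  then show ?thesis by (rule bij_betw_same_card)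
qed

lemma bound_wk: "\<bar>wk P x l\<bar> \<le> int l"
proof -
  have "\<bar>wk P x l\<bar> \<le> (\<Sum>t\<in>{t\<in>P. t<l}. \<bar>sgnb (x t)\<bar>)" unfolding wk_def by (rule sum_abs)
  also have "\<dots> = int (card {t\<in>P. t<l})"
  proof -
    have a: "\<And>b. \<bar>sgnb b\<bar> = 1" by (simp add: sgnb_def)
    show ?thesis by (simp add: a)
  qed
  also have "card {t\<in>P. t<l} \<le> card {..<l}" by (rule card_mono) auto
  finally show ?thesis by simp
qed

lemma sig_maps:
  assumes P: "P \<subseteq> {..<T}" and d: "d > 0" and x: "x \<in> Lv P T d"
  shows "(gstep P T ^^ nat d) x \<in> Lv P T (- d)"
proof -
  have w: "wk P x T = d" and xX: "x \<in> XT T" using x by (auto simp: Lv_def)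
  have "int (nat d) \<le> wk P x T - mn P T x" using w d mn_le0[of P T x] by simp
  note im = iter_main[OF this]
  have ch: "{t. (gstep P T ^^ nat d) x t \<noteq> x t} \<subseteq> {t. t \<in> P \<and> t < T}" using iter_changes by blast
  have "(gstep P T ^^ nat d) x \<in> XT T"
    unfolding XT_def
  proof (intro CollectI allI impI)
    fix t assume t: "t \<notin> {..<T}"
    then have "(gstep P T ^^ nat d) x t = x t" using ch by auto
    then show "(gstep P T ^^ nat d) x t = False" using xX t by (simp add: XT_def)
  qed
  moreover have "wk P ((gstep P T ^^ nat d) x) T = - d" using im w d by simp
  ultimately show ?thesis by (simp add: Lv_def)
qed

lemma sig_inj:
  assumes P: "P \<subseteq> {..<T}" and d: "d > 0"
  shows "inj_on (gstep P T ^^ nat d) (Lv P T d)"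
proof (rule inj_onI)
  fix x y assume x: "x \<in> Lv P T d" and y: "y \<in> Lv P T d" and e: "(gstep P T ^^ nat d) x = (gstep P T ^^ nat d) y"
  have "int (nat d) \<le> wk P x T - mn P T x" using x d mn_le0[of P T x] by (simp add: Lv_def)
  then have hx: "(hstep P T ^^ nat d) ((gstep P T ^^ nat d) x) = x" using iter_main by blast
  have "int (nat d) \<le> wk P y T - mn P T y" using y d mn_le0[of P T y] by (simp add: Lv_def)
  then have hy: "(hstep P T ^^ nat d) ((gstep P T ^^ nat d) y) = y" using iter_main by blast
  show "x = y" using hx hy e by metis
qed

lemma sig_bij:
  assumes P: "P \<subseteq> {..<T}" and d: "d > 0"
  shows "bij_betw (gstep P T ^^ nat d) (Lv P T d) (Lv P T (- d))"
proof -
  let ?s = "gstep P T ^^ nat d"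
  have sub: "?s ` Lv P T d \<subseteq> Lv P T (- d)" using sig_maps[OF P d] by blast
  have "card (?s ` Lv P T d) = card (Lv P T d)" by (rule card_image[OF sig_inj[OF P d]])
  also have "\<dots> = card (Lv P T (- d))" by (rule card_Lv[OF P])
  finally have "?s ` Lv P T d = Lv P T (- d)" by (intro card_subset_eq[OF finite_Lv sub])
  then show ?thesis unfolding bij_betw_def using sig_inj[OF P d] by blast
qed

lemma bij_betw_restrict_pre: "bij_betw f A B \<Longrightarrow> bij_betw f (A \<inter> f -` C) (B \<inter> C)"
  unfolding bij_betw_def by (auto intro: inj_on_subset)


definition fadv :: "nat set \<Rightarrow> nat \<Rightarrow> real \<Rightarrow> (nat \<Rightarrow> bool) \<Rightarrow> (nat \<Rightarrow> bool)" where
  "fadv P T B x = (if 0 < wk P x T \<and> real_of_int (wk P x T) \<le> B then (gstep P T ^^ nat (wk P x T)) x else x)"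

lemma fadv_changes:
  assumes B: "0 \<le> B"
  shows "{t. fadv P T B x t \<noteq> x t} \<subseteq> {..<T} \<and> real (card {t. fadv P T B x t \<noteq> x t}) \<le> B"
proof (cases "0 < wk P x T \<and> real_of_int (wk P x T) \<le> B")
  case True
  have e: "fadv P T B x = (gstep P T ^^ nat (wk P x T)) x" using True by (simp add: fadv_def)
  note ic = iter_changes[where P=P and T=T and j="nat (wk P x T)" and x=x]
  have "real (card {t. fadv P T B x t \<noteq> x t}) \<le> real (nat (wk P x T))" unfolding e using ic by linarith
  also have "\<dots> = real_of_int (wk P x T)" using True by simp
  also have "\<dots> \<le> B" using True by simp
  finally show ?thesis unfolding e using ic by auto
next
  case False
  have "fadv P T B x = x" unfolding fadv_def using False by (rule if_not_P)
  then show ?thesis using B by simp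
qed

locale foldctx =
  fixes P :: "nat set" and T :: nat and a :: real and B :: real and Y :: "(nat \<Rightarrow> bool) set"
  assumes P: "P \<subseteq> {..<T}" and a0: "0 \<le> a" and a1: "a \<le> 1"
begin

definition p where "p = pmf (PB T (bf P a))"
definition q where "q = pmf (PB T (bf P (1 - a)))"
definition G where "G = {x \<in> XT T. \<bar>real_of_int (wk P x T)\<bar> \<le> B}"
definition S where "S = fadv P T B -` Y \<inter> G"
definition Sw where "Sw w = {x \<in> S. wk P x T = w}"

lemma a': "0 \<le> 1 - a" "1 - a \<le> 1" using a0 a1 by auto

lemma rel_pq: "x \<in> XT T \<Longrightarrow> y \<in> XT T \<Longrightarrow> wk P y T = - wk P x T \<Longrightarrow> p y = q x"
  unfolding p_def q_def by (rule pmf_relation[OF P a0 a1])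

lemma rel_qp: "x \<in> XT T \<Longrightarrow> y \<in> XT T \<Longrightarrow> wk P y T = - wk P x T \<Longrightarrow> q y = p x"
  unfolding p_def q_def using pmf_relation[OF P a', of x y] by simp

lemma finite_S: "finite S" unfolding S_def G_def using finite_XT by (rule rev_finite_subset) auto

lemma pair:
  assumes d: "d > 0"
  shows "sum p (Sw d) = sum q (Sw (- d)) \<and> sum p (Sw (- d)) = sum q (Sw d)"
proof (cases "real_of_int d \<le> B")
  case True
  let ?s = "gstep P T ^^ nat d"
  have e1: "Sw d = Lv P T d \<inter> ?s -` Y"
    using True d by (auto simp: Sw_def S_def G_def Lv_def fadv_def)
  have e2: "Sw (- d) = Lv P T (- d) \<inter> Y"
    using True d by (auto simp: Sw_def S_def G_def Lv_def fadv_def)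
  have bij: "bij_betw ?s (Sw d) (Sw (- d))"
    unfolding e1 e2 by (rule bij_betw_restrict_pre[OF sig_bij[OF P d]])
  have mem: "x \<in> XT T \<and> wk P x T = d \<and> ?s x \<in> XT T \<and> wk P (?s x) T = - d" if "x \<in> Sw d" for x
    using that sig_maps[OF P d, of x] e1 by (auto simp: Lv_def)
  have "sum q (Sw (- d)) = sum (\<lambda>x. q (?s x)) (Sw d)" by (rule sum.reindex_bij_betw[OF bij, symmetric])
  also have "\<dots> = sum p (Sw d)" by (rule sum.cong[OF refl]) (use mem rel_qp in auto)
  finally have A: "sum p (Sw d) = sum q (Sw (- d))" by simp
  have "sum p (Sw (- d)) = sum (\<lambda>x. p (?s x)) (Sw d)" by (rule sum.reindex_bij_betw[OF bij, symmetric])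
  also have "\<dots> = sum q (Sw d)" by (rule sum.cong[OF refl]) (use mem rel_pq in auto)
  finally show ?thesis using A by simp
next
  case False
  then have "Sw d = {}" "Sw (- d) = {}" by (auto simp: Sw_def S_def G_def)
  then show ?thesis by simp
qed

lemma zero_level: "sum p (Sw 0) = sum q (Sw 0)"
  by (rule sum.cong[OF refl]) (use rel_pq in \<open>auto simp: Sw_def S_def G_def\<close>)

lemma fold_eq: "sum p S = sum q S"
proof -
  let ?I = "{- int T..int T}"
  have img: "(\<lambda>x. wk P x T) ` S \<subseteq> ?I"
  proof (rule image_subsetI)
    fix x
    have h: "\<bar>wk P x T\<bar> \<le> int T" by (rule bound_wk)
    then show "wk P x T \<in> ?I" unfolding atLeastAtMost_iff abs_le_iff by linarith
  qed
  have fI: "finite ?I" by simp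
  have "sum p S = (\<Sum>w\<in>?I. sum p (Sw w))"
    unfolding Sw_def by (rule sum.group[OF finite_S fI img, symmetric])
  also have "\<dots> = (\<Sum>w\<in>?I. sum q (Sw (- w)))"
  proof (rule sum.cong[OF refl])
    fix w :: int
    show "sum p (Sw w) = sum q (Sw (- w))"
    proof (cases "w > 0")
      case True then show ?thesis using pair by blast
    next
      case False
      show ?thesis
      proof (cases "w = 0")
        case True then show ?thesis using zero_level by simp
      next
        case False
        then have "- w > 0" using \<open>\<not> w > 0\<close> by simp
        then show ?thesis using pair[of "- w"] by simp
      qed
    qed
  qed
  also have "\<dots> = (\<Sum>w\<in>?I. sum q (Sw w))"
    by (rule sum.reindex_bij_witness[where i = uminus and j = uminus]) auto
  also have "\<dots> = sum q S"
    unfolding Sw_def by (rule sum.group[OF finite_S fI img])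
  finally show ?thesis .
qed

lemma fold_bound:
  "measure_pmf.prob (PB T (bf P a)) (fadv P T B -` Y) - measure_pmf.prob (PB T (bf P (1 - a))) (fadv P T B -` Y)
     \<le> measure_pmf.prob (PB T (bf P a)) {x. B < \<bar>real_of_int (wk P x T)\<bar>}"
proof -
  let ?F = "fadv P T B -` Y"
  let ?R = "?F \<inter> XT T - G"
  have split: "?F \<inter> XT T = S \<union> ?R" "S \<inter> ?R = {}" by (auto simp: S_def G_def)
  have fR: "finite ?R" using finite_XT by (rule rev_finite_subset) auto
  have p0: "\<And>x. 0 \<le> p x" "\<And>x. 0 \<le> q x" by (simp_all add: p_def q_def)
  have "measure_pmf.prob (PB T (bf P a)) ?F = sum p S + sum p ?R"
  proof -
    have "measure_pmf.prob (PB T (bf P a)) ?F = sum p (?F \<inter> XT T)" unfolding prob_PB p_def ..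
    also have "\<dots> = sum p (S \<union> ?R)" by (rule arg_cong[OF split(1)])
    also have "\<dots> = sum p S + sum p ?R" by (rule sum.union_disjoint[OF finite_S fR split(2)])
    finally show ?thesis .
  qed
  moreover have "measure_pmf.prob (PB T (bf P (1 - a))) ?F = sum q S + sum q ?R"
  proof -
    have "measure_pmf.prob (PB T (bf P (1 - a))) ?F = sum q (?F \<inter> XT T)" unfolding prob_PB q_def ..
    also have "\<dots> = sum q (S \<union> ?R)" by (rule arg_cong[OF split(1)])
    also have "\<dots> = sum q S + sum q ?R" by (rule sum.union_disjoint[OF finite_S fR split(2)])
    finally show ?thesis .
  qed
  moreover have "sum q ?R \<ge> 0" by (rule sum_nonneg) (use p0 in auto)
  moreover have "sum p ?R \<le> sum p ({x. B < \<bar>real_of_int (wk P x T)\<bar>} \<inter> XT T)"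
    by (rule sum_mono2) (use finite_XT p0 in \<open>auto simp: G_def\<close>)
  moreover have "sum p ({x. B < \<bar>real_of_int (wk P x T)\<bar>} \<inter> XT T) = measure_pmf.prob (PB T (bf P a)) {x. B < \<bar>real_of_int (wk P x T)\<bar>}"
    unfolding prob_PB p_def ..
  ultimately show ?thesis using fold_eq by linarith
qed

end

lemma fold_bound:
  assumes "P \<subseteq> {..<T}" "0 \<le> a" "a \<le> 1"
  shows "measure_pmf.prob (PB T (bf P a)) (fadv P T B -` Y) - measure_pmf.prob (PB T (bf P (1 - a))) (fadv P T B -` Y)
     \<le> measure_pmf.prob (PB T (bf P a)) {x. B < \<bar>real_of_int (wk P x T)\<bar>}"
proof -
  interpret foldctx P T a B Y using assms by unfold_locales
  show ?thesis by (rule fold_bound)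
qed


lemma fin_set_PB: "finite (set_pmf (PB T \<beta>))" using finite_XT set_PB by (rule finite_subset[rotated])

lemma int_PB[simp]: "integrable (measure_pmf (PB T \<beta>)) (f :: _ \<Rightarrow> real)"
  by (rule integrable_measure_pmf_finite[OF fin_set_PB])

lemma E_PB_sum: "measure_pmf.expectation (PB T \<beta>) f = (\<Sum>x\<in>XT T. f x * pmf (PB T \<beta>) x)"
  by (rule integral_measure_pmf_real[OF finite_XT]) (use set_PB in auto)

lemma E_prod_PB:
  fixes f :: "nat \<Rightarrow> bool \<Rightarrow> real"
  assumes "\<And>t b. 0 \<le> f t b" and "\<And>t. 0 \<le> \<beta> t \<and> \<beta> t \<le> 1"
  shows "measure_pmf.expectation (PB T \<beta>) (\<lambda>x. \<Prod>t<T. f t (x t)) = (\<Prod>t<T. f t True * \<beta> t + f t False * (1 - \<beta> t))"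
proof -
  have "measure_pmf.expectation (PB T \<beta>) (\<lambda>x. \<Prod>t\<in>{..<T}. f t (x t)) =
        (\<Prod>t\<in>{..<T}. measure_pmf.expectation (bernoulli_pmf (\<beta> t)) (f t))"
    unfolding PB_def
  proof (rule expectation_prod_Pi_pmf)
    fix t
    have "finite (set_pmf (bernoulli_pmf (\<beta> t)))" by (rule finite_subset[of _ UNIV]) auto
    then show "integrable (measure_pmf (bernoulli_pmf (\<beta> t))) (f t)" by (rule integrable_measure_pmf_finite)
  qed (use assms in auto)
  also have "\<dots> = (\<Prod>t<T. f t True * \<beta> t + f t False * (1 - \<beta> t))"
    by (rule prod.cong[OF refl]) (use assms(2) in auto)
  finally show ?thesis by simp
qed

lemma prod_ind:
  assumes C: "C \<subseteq> {..<(T::nat)}"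
  shows "(\<Prod>t<T. (if t \<in> C then (g t :: real) else 1)) = (\<Prod>t\<in>C. g t)"
proof -
  have "(\<Prod>t<T. (if t \<in> C then g t else 1)) = (\<Prod>t\<in>{..<T} \<inter> {t. t \<in> C}. g t) * (\<Prod>t\<in>{..<T} \<inter> - {t. t \<in> C}. 1)"
    by (rule prod.If_cases) simp
  also have "{..<T} \<inter> {t. t \<in> C} = C" using C by auto
  finally show ?thesis by simp
qed

lemma E_ind_prod:
  assumes C: "C \<subseteq> {..<T}" and \<beta>: "\<And>t. 0 \<le> \<beta> t \<and> \<beta> t \<le> 1"
  shows "measure_pmf.expectation (PB T \<beta>) (\<lambda>x. \<Prod>t\<in>C. of_bool (x t)) = (\<Prod>t\<in>C. \<beta> t)"
proof -
  let ?f = "\<lambda>t b. if t \<in> C then of_bool b else (1::real)"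
  have "(\<lambda>x. \<Prod>t\<in>C. of_bool (x t) :: real) = (\<lambda>x. \<Prod>t<T. ?f t (x t))"
    by (rule ext) (simp add: prod_ind[OF C, symmetric] if_distrib)
  then have "measure_pmf.expectation (PB T \<beta>) (\<lambda>x. \<Prod>t\<in>C. of_bool (x t)) =
     (\<Prod>t<T. ?f t True * \<beta> t + ?f t False * (1 - \<beta> t))"
    by (simp only:) (rule E_prod_PB[OF _ \<beta>], simp)
  also have "\<dots> = (\<Prod>t<T. if t \<in> C then \<beta> t else 1)" by (rule prod.cong) auto
  also have "\<dots> = (\<Prod>t\<in>C. \<beta> t)" by (rule prod_ind[OF C])
  finally show ?thesis .
qed

lemma wk_real: "P \<subseteq> {..<T} \<Longrightarrow> real_of_int (wk P x T) = (\<Sum>t\<in>P. 2 * of_bool (x t) - 1)"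
proof -
  assume P: "P \<subseteq> {..<T}"
  have e: "{t\<in>P. t<T} = P" using P by auto
  show ?thesis unfolding wk_def e by (simp add: sgnb_def of_int_sum) (rule sum.cong, auto)
qed

lemma second_moment:
  assumes P: "P \<subseteq> {..<T}" and a: "0 \<le> a" "a \<le> 1"
  shows "measure_pmf.expectation (PB T (bf P a)) (\<lambda>x. (real_of_int (wk P x T))^2)
     \<le> real (card P) + (real (card P))^2 * (2 * a - 1)^2"
proof -
  let ?M = "PB T (bf P a)"
  let ?E = "measure_pmf.expectation ?M"
  let ?z = "\<lambda>t x. of_bool (x t) :: real"
  have \<beta>: "\<And>t. 0 \<le> bf P a t \<and> bf P a t \<le> 1" using bf_range[OF a] by blast
  have f: "finite P" using P by (rule finP)
  have Ez: "?E (?z t) = a" if "t \<in> P" for t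
    using E_ind_prod[of "{t}" T "bf P a", OF _ \<beta>] that P by (auto simp: bf_def)
  have Ezz: "?E (\<lambda>x. ?z t x * ?z u x) = a * a" if "t \<in> P" "u \<in> P" "t \<noteq> u" for t u
  proof -
    have "?E (\<lambda>x. \<Prod>v\<in>{t,u}. ?z v x) = (\<Prod>v\<in>{t,u}. bf P a v)"
      by (rule E_ind_prod[OF _ \<beta>]) (use that P in auto)
    then show ?thesis using that by (simp add: bf_def)
  qed
  have trm: "?E (\<lambda>x. (2 * ?z t x - 1) * (2 * ?z u x - 1)) = (if t = u then 1 else (2 * a - 1)^2)"
    if "t \<in> P" "u \<in> P" for t u
  proof (cases "t = u")
    case True
    have "(\<lambda>x. (2 * ?z t x - 1) * (2 * ?z u x - 1)) = (\<lambda>x. 1)" using True by (auto simp: of_bool_def)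
    then show ?thesis using True by simp
  next
    case False
    have "(\<lambda>x. (2 * ?z t x - 1) * (2 * ?z u x - 1)) = (\<lambda>x. 4 * (?z t x * ?z u x) - 2 * ?z t x - 2 * ?z u x + 1)"
      by (rule ext) (simp add: algebra_simps)
    then have "?E (\<lambda>x. (2 * ?z t x - 1) * (2 * ?z u x - 1)) = 4 * ?E (\<lambda>x. ?z t x * ?z u x) - 2 * ?E (?z t) - 2 * ?E (?z u) + 1"
      by simp
    also have "\<dots> = (2 * a - 1)^2" using Ezz[OF that False] Ez that by (simp add: power2_eq_square algebra_simps)
    finally show ?thesis using False by simp
  qed
  have sq: "(\<lambda>x. (real_of_int (wk P x T))^2) = (\<lambda>x. \<Sum>t\<in>P. \<Sum>u\<in>P. (2 * ?z t x - 1) * (2 * ?z u x - 1))"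
    by (rule ext) (simp add: wk_real[OF P] power2_eq_square sum_product)
  have "?E (\<lambda>x. (real_of_int (wk P x T))^2) = (\<Sum>t\<in>P. \<Sum>u\<in>P. ?E (\<lambda>x. (2 * ?z t x - 1) * (2 * ?z u x - 1)))"
    unfolding sq by (simp add: Bochner_Integration.integral_sum)
  also have "\<dots> = (\<Sum>t\<in>P. \<Sum>u\<in>P. if t = u then 1 else (2 * a - 1)^2)"
    by (intro sum.cong refl trm)
  also have "\<dots> = (\<Sum>t\<in>P. real (card P) * (2 * a - 1)^2 + (1 - (2 * a - 1)^2))"
  proof (rule sum.cong[OF refl])
    fix t assume t: "t \<in> P"
    let ?c = "(2 * a - 1)^2"
    have "(\<Sum>u\<in>P. if t = u then 1 else ?c) = (\<Sum>u\<in>P. ?c + (if t = u then 1 - ?c else 0))"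
      by (rule sum.cong) auto
    also have "\<dots> = real (card P) * ?c + (1 - ?c)" using t f by (simp add: sum.distrib)
    finally show "(\<Sum>u\<in>P. if t = u then 1 else ?c) = real (card P) * ?c + (1 - ?c)" .
  qed
  also have "\<dots> = real (card P) * (real (card P) * (2 * a - 1)^2) + real (card P) - real (card P) * (2 * a - 1)^2"
    by (simp add: algebra_simps)
  also have "\<dots> \<le> real (card P) + (real (card P))^2 * (2 * a - 1)^2"
  proof -
    have "0 \<le> real (card P) * (2 * a - 1)^2" by simp
    then show ?thesis by (simp add: power2_eq_square algebra_simps)
  qed
  finally show ?thesis .
qed

lemma cheb:
  assumes P: "P \<subseteq> {..<T}" and a: "0 \<le> a" "a \<le> 1" and B: "B > 0"
  shows "measure_pmf.prob (PB T (bf P a)) {x. B < \<bar>real_of_int (wk P x T)\<bar>}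
     \<le> (real (card P) + (real (card P))^2 * (2 * a - 1)^2) / B^2"
proof -
  let ?M = "PB T (bf P a)"
  let ?Z = "{x. B < \<bar>real_of_int (wk P x T)\<bar>}"
  have "measure_pmf.prob ?M ?Z = measure_pmf.expectation ?M (indicator ?Z)"
    by (simp add: measure_pmf.emeasure_eq_measure)
  also have "\<dots> \<le> measure_pmf.expectation ?M (\<lambda>x. (real_of_int (wk P x T))^2 / B^2)"
  proof (rule integral_mono)
    fix x
    show "indicator ?Z x \<le> (real_of_int (wk P x T))^2 / B^2"
    proof (cases "x \<in> ?Z")
      case True
      then have "B < \<bar>real_of_int (wk P x T)\<bar>" by simp
      then have "B^2 < \<bar>real_of_int (wk P x T)\<bar>^2" by (rule power_strict_mono) (use B in auto)
      then have "B^2 < (real_of_int (wk P x T))^2" by simp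
      then show ?thesis using True B by (simp add: field_simps)
    next
      case False then show ?thesis by simp
    qed
  qed simp_all
  also have "\<dots> = measure_pmf.expectation ?M (\<lambda>x. (real_of_int (wk P x T))^2) / B^2" by simp
  also have "\<dots> \<le> (real (card P) + (real (card P))^2 * (2 * a - 1)^2) / B^2"
    using second_moment[OF P a] B by (simp add: divide_right_mono)
  finally show ?thesis .
qed


lemma young_aux: "c > 0 \<Longrightarrow> (y::real) \<le> y^2 / (2 * c) + c / 2"
proof -
  assume c: "c > 0"
  have "0 \<le> (y - c)^2" by simp
  then have "2 * c * y \<le> y^2 + c^2" by (simp add: power2_eq_square algebra_simps)
  then show ?thesis using c by (simp add: field_simps power2_eq_square)
qed

lemma stat_bound:
  assumes P: "P \<subseteq> {..<T}" and a: "0 \<le> a" "a \<le> 1" and c: "c > 0"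
  shows "measure_pmf.prob (PB T (bf P a)) Y - measure_pmf.prob (PB T (\<lambda>_. 1/2)) Y
     \<le> ((2 * a^2 + 2 * (1 - a)^2) ^ card P - 1) / (2 * c) + c / 2"
proof -
  let ?M1 = "PB T (bf P a)" and ?M0 = "PB T (\<lambda>_. 1/2)"
  define p1 where "p1 = pmf ?M1"
  define p0 where "p0 = pmf ?M0"
  define l where "l t b = (if t \<in> P then 2 * bw a b else 1)" for t b
  define L where "L x = (\<Prod>t<T. l t (x t))" for x
  have \<beta>1: "\<And>t. 0 \<le> bf P a t \<and> bf P a t \<le> 1" using bf_range[OF a] by blast
  have \<beta>0: "\<And>t::nat. 0 \<le> (1/2::real) \<and> (1/2::real) \<le> 1" by simp
  have R: "p1 x = p0 x * L x" if x: "x \<in> XT T" for x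
  proof -
    have "p1 x = (\<Prod>t<T. bw (bf P a t) (x t))" unfolding p1_def by (rule pmf_PB[OF \<beta>1 x])
    also have "\<dots> = (\<Prod>t<T. bw (1/2) (x t) * l t (x t))"
      by (rule prod.cong[OF refl]) (auto simp: bw_def bf_def l_def)
    also have "\<dots> = (\<Prod>t<T. bw (1/2) (x t)) * L x" by (simp add: prod.distrib L_def)
    also have "(\<Prod>t<T. bw (1/2) (x t)) = p0 x" unfolding p0_def by (rule pmf_PB[OF \<beta>0 x, symmetric])
    finally show ?thesis .
  qed
  have p0nn: "0 \<le> p0 x" for x by (simp add: p0_def)
  have s0: "(\<Sum>x\<in>XT T. p0 x) = 1" unfolding p0_def by (rule sum_pmf_eq_1[OF finite_XT set_PB])
  have s1: "(\<Sum>x\<in>XT T. p0 x * L x) = 1"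
  proof -
    have "(\<Sum>x\<in>XT T. p0 x * L x) = (\<Sum>x\<in>XT T. p1 x)" by (rule sum.cong) (auto simp: R)
    also have "\<dots> = 1" unfolding p1_def by (rule sum_pmf_eq_1[OF finite_XT set_PB])
    finally show ?thesis .
  qed
  have s2: "(\<Sum>x\<in>XT T. p0 x * (L x)^2) = (2 * a^2 + 2 * (1 - a)^2) ^ card P"
  proof -
    have "(\<Sum>x\<in>XT T. p0 x * (L x)^2) = measure_pmf.expectation ?M0 (\<lambda>x. \<Prod>t<T. (l t (x t))^2)"
      unfolding E_PB_sum p0_def L_def by (simp add: prod_power_distrib mult.commute)
    also have "\<dots> = (\<Prod>t<T. (l t True)^2 * (1/2) + (l t False)^2 * (1 - 1/2))"
      by (rule E_prod_PB) simp_all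
    also have "\<dots> = (\<Prod>t<T. if t \<in> P then 2 * a^2 + 2 * (1 - a)^2 else 1)"
      by (rule prod.cong[OF refl]) (simp add: l_def bw_def power2_eq_square field_simps)
    also have "\<dots> = (\<Prod>t\<in>P. 2 * a^2 + 2 * (1 - a)^2)" by (rule prod_ind[OF P])
    finally show ?thesis by simp
  qed
  have "measure_pmf.prob ?M1 Y - measure_pmf.prob ?M0 Y = (\<Sum>x\<in>Y \<inter> XT T. p1 x) - (\<Sum>x\<in>Y \<inter> XT T. p0 x)"
    unfolding prob_PB p1_def p0_def ..
  also have "\<dots> = (\<Sum>x\<in>Y \<inter> XT T. p0 x * (L x - 1))"
    by (simp add: sum_subtractf[symmetric] R algebra_simps)
  also have "\<dots> \<le> (\<Sum>x\<in>Y \<inter> XT T. p0 x * ((L x - 1)^2 / (2 * c) + c / 2))"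
    by (rule sum_mono) (rule mult_left_mono[OF young_aux[OF c] p0nn])
  also have "\<dots> \<le> (\<Sum>x\<in>XT T. p0 x * ((L x - 1)^2 / (2 * c) + c / 2))"
    by (rule sum_mono2[OF finite_XT]) (use c p0nn in auto)
  also have "\<dots> = ((\<Sum>x\<in>XT T. p0 x * (L x)^2) - 2 * (\<Sum>x\<in>XT T. p0 x * L x) + (\<Sum>x\<in>XT T. p0 x)) / (2 * c)
      + c / 2 * (\<Sum>x\<in>XT T. p0 x)"
    by (simp add: sum_distrib_left sum_divide_distrib sum.distrib sum_subtractf power2_eq_square algebra_simps diff_divide_distrib add_divide_distrib)
  also have "\<dots> = ((2 * a^2 + 2 * (1 - a)^2) ^ card P - 1) / (2 * c) + c / 2"
    unfolding s0 s1 s2 by simp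
  finally show ?thesis .
qed


lemma int_bounded_pmf: "(\<And>x. \<bar>f x\<bar> \<le> (C::real)) \<Longrightarrow> integrable (measure_pmf M) f"
  by (rule measure_pmf.integrable_const_bound[where B = C]) auto

lemma prob_bind: "measure_pmf.prob (bind_pmf M N) X = measure_pmf.expectation M (\<lambda>x. measure_pmf.prob (N x) X)"
proof -
  have int: "integrable (measure_pmf M) (\<lambda>x. measure_pmf.prob (N x) X)"
    by (rule int_bounded_pmf[where C = 1]) simp
  have nn: "0 \<le> measure_pmf.expectation M (\<lambda>x. measure_pmf.prob (N x) X)" by simp
  have "ennreal (measure_pmf.prob (bind_pmf M N) X) = emeasure (measure_pmf (bind_pmf M N)) X"
    by (simp add: measure_pmf.emeasure_eq_measure)
  also have "\<dots> = (\<integral>\<^sup>+x. emeasure (measure_pmf (N x)) X \<partial>measure_pmf M)" by simp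
  also have "\<dots> = (\<integral>\<^sup>+x. ennreal (measure_pmf.prob (N x) X) \<partial>measure_pmf M)"
    by (simp add: measure_pmf.emeasure_eq_measure)
  also have "\<dots> = ennreal (measure_pmf.expectation M (\<lambda>x. measure_pmf.prob (N x) X))"
    by (rule nn_integral_eq_integral[OF int]) simp
  finally show ?thesis using nn by simp
qed

lemma est_prob: "measure_pmf.prob (estimates_dist ps T A \<rho> adv) S =
   measure_pmf.expectation A (\<lambda>p. measure_pmf.prob (outcome_dist ps T (fst p) \<rho>) (adv (fst p) -` (snd p -` S)))"
  unfolding estimates_dist_def prob_bind
proof (rule Bochner_Integration.integral_cong[OF refl])
  fix p :: "(nat \<Rightarrow> nat) \<times> ((nat \<Rightarrow> bool) \<Rightarrow> nat \<Rightarrow> real)"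
  obtain s e where p: "p = (s, e)" by (cases p)
  have "(\<lambda>x. e (adv s x)) -` S = adv s -` (e -` S)" by auto
  then show "measure_pmf.prob (case p of (s, e) \<Rightarrow> map_pmf (\<lambda>x. e (adv s x)) (outcome_dist ps T s \<rho>)) S =
      measure_pmf.prob (outcome_dist ps T (fst p) \<rho>) (adv (fst p) -` (snd p -` S))"
    unfolding p by (simp add: measure_map_pmf)
qed

lemma distinguish:
  fixes A :: nonadaptive_alg and g :: "(nat \<Rightarrow> nat) \<Rightarrow> real"
  assumes bnd: "\<And>s e Y. (s,e) \<in> set_pmf A \<Longrightarrow>
      measure_pmf.prob (outcome_dist ps T s \<rho>a) (adva s -` Y) - measure_pmf.prob (outcome_dist ps T s \<rho>b) (advb s -` Y) \<le> g s"
    and gb: "\<And>s. \<bar>g s\<bar> \<le> C"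
    and Eg: "measure_pmf.expectation A (\<lambda>p. g (fst p)) < 1/3"
    and sa: "success_prob ps M T A \<rho>a adva \<epsilon> \<ge> 2/3"
    and sb: "success_prob ps M T A \<rho>b advb \<epsilon> \<ge> 2/3"
    and i: "i < M"
  shows "expval (pauli_obs (ps i)) \<rho>a - expval (pauli_obs (ps i)) \<rho>b \<le> 2 * \<epsilon>"
proof (rule ccontr)
  assume c: "\<not> ?thesis"
  define Sa where "Sa = {E. \<forall>j<M. \<bar>E j - expval (pauli_obs (ps j)) \<rho>a\<bar> \<le> \<epsilon>}"
  define Sb where "Sb = {E. \<forall>j<M. \<bar>E j - expval (pauli_obs (ps j)) \<rho>b\<bar> \<le> \<epsilon>}"
  let ?Pa = "estimates_dist ps T A \<rho>a adva" and ?Pb = "estimates_dist ps T A \<rho>b advb"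
  have disj: "Sa \<subseteq> UNIV - Sb"
  proof
    fix E assume "E \<in> Sa"
    then have "\<bar>E i - expval (pauli_obs (ps i)) \<rho>a\<bar> \<le> \<epsilon>" using i by (simp add: Sa_def)
    moreover have "E \<in> Sb \<Longrightarrow> \<bar>E i - expval (pauli_obs (ps i)) \<rho>b\<bar> \<le> \<epsilon>" using i by (simp add: Sb_def)
    ultimately show "E \<in> UNIV - Sb" using c by (auto simp: abs_le_iff)
  qed
  have "measure_pmf.prob ?Pb Sa \<le> measure_pmf.prob ?Pb (UNIV - Sb)"
    by (rule measure_pmf.finite_measure_mono[OF disj]) simp
  also have "\<dots> = 1 - measure_pmf.prob ?Pb Sb" using measure_pmf.prob_compl[of Sb ?Pb] by simp
  also have "measure_pmf.prob ?Pb Sb = success_prob ps M T A \<rho>b advb \<epsilon>" by (simp add: success_prob_def Sb_def)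
  finally have pb: "measure_pmf.prob ?Pb Sa \<le> 1/3" using sb by simp
  let ?Fa = "\<lambda>p. measure_pmf.prob (outcome_dist ps T (fst p) \<rho>a) (adva (fst p) -` (snd p -` Sa))"
  let ?Fb = "\<lambda>p. measure_pmf.prob (outcome_dist ps T (fst p) \<rho>b) (advb (fst p) -` (snd p -` Sa))"
  have ia: "integrable (measure_pmf A) ?Fa" by (rule int_bounded_pmf[where C = 1]) simp
  have ib: "integrable (measure_pmf A) ?Fb" by (rule int_bounded_pmf[where C = 1]) simp
  have ig: "integrable (measure_pmf A) (\<lambda>p. g (fst p))" by (rule int_bounded_pmf[where C = C]) (rule gb)
  have "measure_pmf.prob ?Pa Sa - measure_pmf.prob ?Pb Sa = measure_pmf.expectation A (\<lambda>p. ?Fa p - ?Fb p)"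
    unfolding est_prob by (rule Bochner_Integration.integral_diff[OF ia ib, symmetric])
  also have "\<dots> \<le> measure_pmf.expectation A (\<lambda>p. g (fst p))"
  proof (rule integral_mono_AE)
    show "integrable (measure_pmf A) (\<lambda>p. ?Fa p - ?Fb p)" using ia ib by simp
    show "integrable (measure_pmf A) (\<lambda>p. g (fst p))" by (rule ig)
    show "AE p in measure_pmf A. ?Fa p - ?Fb p \<le> g (fst p)"
    proof (rule AE_pmfI)
      fix p assume "p \<in> set_pmf A"
      then show "?Fa p - ?Fb p \<le> g (fst p)" using bnd[of "fst p" "snd p"] by simp
    qed
  qed
  finally have "measure_pmf.prob ?Pa Sa < 2/3" using pb Eg by simp
  moreover have "measure_pmf.prob ?Pa Sa = success_prob ps M T A \<rho>a adva \<epsilon>" by (simp add: success_prob_def Sa_def)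
  ultimately show False using sa by simp
qed


lemma pow_exp_bound:
  assumes "0 \<le> x" "real k * x \<le> 1/2"
  shows "(1 + x) ^ k \<le> 1 + 2 * (real k * x)"
proof -
  have "(1 + x) ^ k \<le> exp x ^ k" by (rule power_mono) (use assms in auto)
  also have "\<dots> = exp (real k * x)" by (simp add: exp_of_nat_mult)
  also have "\<dots> \<le> 1 + 2 * (real k * x)" by (rule real_exp_bound_lemma) (use assms in auto)
  finally show ?thesis .
qed

locale psetup =
  fixes N M :: nat and ps :: "nat \<Rightarrow> nat list"
  assumes H: "\<forall>i<M. is_pauli_string N (ps i) \<and> ps i \<noteq> replicate N 0"
    and inj: "inj_on ps {..<M}"
begin

abbreviation "dd \<equiv> (2::nat) ^ N"
abbreviation "Ob j \<equiv> pauli_obs (ps j)"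

lemma len: "j < M \<Longrightarrow> length (ps j) = N" using H by (simp add: is_pauli_string_def)
lemma codes: "j < M \<Longrightarrow> \<forall>k\<in>set (ps j). k < 4" using H by (simp add: is_pauli_string_def)

lemma O_carrier: "j < M \<Longrightarrow> Ob j \<in> carrier_mat dd dd" using pobs_carrier[of "ps j"] len by simp
lemma O_herm: "herm (Ob j)" by (rule pobs_herm)
lemma O_sq: "j < M \<Longrightarrow> Ob j * Ob j = 1\<^sub>m dd" using pobs_sq[of "ps j"] len by simp
lemma O_tr0: "j < M \<Longrightarrow> mtrace (Ob j) = 0" using pobs_tr1[of "ps j" N] len codes H by simp
lemma O_tr2: "j < M \<Longrightarrow> i < M \<Longrightarrow> mtrace (Ob j * Ob i) = complex_of_real (if j = i then 1 else 0) * of_nat dd"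
proof -
  assume j: "j < M" and i: "i < M"
  have "mtrace (Ob j * Ob i) = (if ps j = ps i then 2 ^ length (ps j) else 0)"
    by (rule pobs_tr) (use len[OF j] len[OF i] codes[OF j] codes[OF i] in auto)
  moreover have "(ps j = ps i) = (j = i)" using inj i j by (auto simp: inj_on_def)
  ultimately show ?thesis using len[OF j] len[OF i] by simp
qed

lemma dpos: "dd > 0" by simp

lemma rho_dens: "i < M \<Longrightarrow> \<bar>\<delta>\<bar> \<le> 1 \<Longrightarrow> density_matrix dd (rho dd \<delta> (Ob i))"
  by (rule rho_density[OF O_carrier O_herm O_sq O_tr0 dpos])

lemma born_eq: "i < M \<Longrightarrow> j < M \<Longrightarrow> born_prob (Ob j) (rho dd \<delta> (Ob i)) True = (1 + \<delta> * (if j = i then 1 else 0)) / 2"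
  by (rule born_rho[OF O_carrier O_carrier dpos O_tr0 O_tr0 O_tr2])

lemma expval_eq: "i < M \<Longrightarrow> expval (Ob i) (rho dd \<delta> (Ob i)) = \<delta>"
  using expval_rho[OF O_carrier O_carrier dpos O_tr0 O_tr2[of i i], of \<delta>] by simp

lemma outcome_eq:
  assumes i: "i < M" and s: "\<forall>t<T. s t < M"
  shows "outcome_dist ps T s (rho dd \<delta> (Ob i)) = PB T (bf {t. t < T \<and> s t = i} ((1 + \<delta>) / 2))"
  unfolding outcome_dist_def PB_def
proof (rule Pi_pmf_cong[OF refl refl])
  fix t assume t: "t \<in> {..<T}"
  then have st: "s t < M" using s by simp
  show "bernoulli_pmf (born_prob (Ob (s t)) (rho dd \<delta> (Ob i)) True) = bernoulli_pmf (bf {t. t < T \<and> s t = i} ((1 + \<delta>) / 2) t)"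
    unfolding born_eq[OF i st] using t by (simp add: bf_def)
qed

end

definition kc :: "nat \<Rightarrow> (nat \<Rightarrow> nat) \<Rightarrow> nat \<Rightarrow> nat" where "kc T s i = card {t. t < T \<and> s t = i}"

lemma kc_le: "kc T s i \<le> T"
proof -
  have "kc T s i \<le> card {..<T}" unfolding kc_def by (rule card_mono) auto
  then show ?thesis by simp
qed

lemma kc_sum: "\<forall>t<T. s t < M \<Longrightarrow> (\<Sum>i<M. kc T s i) = T"
proof -
  assume s: "\<forall>t<T. s t < M"
  have e: "{t. t < T \<and> s t = i} = {t\<in>{..<T}. s t = i}" for i by auto
  have "(\<Sum>i<M. kc T s i) = (\<Sum>i<M. \<Sum>t\<in>{t\<in>{..<T}. s t = i}. (1::nat))" unfolding kc_def e by simp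
  also have "\<dots> = (\<Sum>t\<in>{..<T}. (1::nat))" by (rule sum.group) (use s in auto)
  finally show ?thesis by simp
qed

lemma choose_i:
  fixes A :: nonadaptive_alg
  assumes M: "M \<ge> 1" and valid: "valid_alg M T A"
  shows "\<exists>i<M. measure_pmf.expectation A (\<lambda>p. real (kc T (fst p) i)) \<le> real T / real M"
proof (rule ccontr)
  assume "\<not> ?thesis"
  then have gt: "\<And>i. i < M \<Longrightarrow> real T / real M < measure_pmf.expectation A (\<lambda>p. real (kc T (fst p) i))" by force
  have int: "\<And>i. integrable (measure_pmf A) (\<lambda>p. real (kc T (fst p) i))"
    by (rule int_bounded_pmf[where C = "real T"]) (simp add: kc_le)
  have "(\<Sum>i<M. measure_pmf.expectation A (\<lambda>p. real (kc T (fst p) i))) = measure_pmf.expectation A (\<lambda>p. \<Sum>i<M. real (kc T (fst p) i))"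
    by (rule Bochner_Integration.integral_sum[symmetric]) (rule int)
  also have "\<dots> = measure_pmf.expectation A (\<lambda>p. real T)"
  proof (rule integral_cong_AE)
    show "AE p in measure_pmf A. (\<Sum>i<M. real (kc T (fst p) i)) = real T"
    proof (rule AE_pmfI)
      fix p assume "p \<in> set_pmf A"
      then have "\<forall>t<T. fst p t < M" using valid by (cases p) (auto simp: valid_alg_def)
      then show "(\<Sum>i<M. real (kc T (fst p) i)) = real T" using kc_sum by (metis of_nat_sum)
    qed
  qed simp_all
  also have "\<dots> = real T" by simp
  finally have s: "(\<Sum>i<M. measure_pmf.expectation A (\<lambda>p. real (kc T (fst p) i))) = real T" .
  have "(\<Sum>i<M. real T / real M) < (\<Sum>i<M. measure_pmf.expectation A (\<lambda>p. real (kc T (fst p) i)))"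
    by (rule sum_strict_mono) (use M gt in \<open>auto simp: lessThan_empty_iff\<close>)
  then show False using s M by simp
qed

lemma markov_g:
  fixes A :: nonadaptive_alg
  assumes E: "measure_pmf.expectation A (\<lambda>p. real (kc T (fst p) i)) \<le> real T / real M" and M: "M \<ge> 1"
  defines "K \<equiv> 12 * real T / real M"
  shows "measure_pmf.expectation A (\<lambda>p. if real (kc T (fst p) i) \<le> K then 1/6 else (1::real)) \<le> 1/4"
proof (cases "T = 0")
  case True
  then have "\<And>p. real (kc T (fst p) i) \<le> K" using kc_le[of T] by (simp add: K_def)
  then have eqf: "(\<lambda>p. if real (kc T (fst p) i) \<le> K then 1/6 else (1::real)) = (\<lambda>p. 1/6)" by auto
  show ?thesis unfolding eqf by simp
next
  case False
  have K: "K > 0" using False M by (simp add: K_def)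
  have int: "integrable (measure_pmf A) (\<lambda>p. real (kc T (fst p) i))"
    by (rule int_bounded_pmf[where C = "real T"]) (simp add: kc_le)
  have "measure_pmf.expectation A (\<lambda>p. if real (kc T (fst p) i) \<le> K then 1/6 else (1::real))
     \<le> measure_pmf.expectation A (\<lambda>p. real (kc T (fst p) i) / K + 1/6)"
  proof (rule integral_mono)
    show "integrable (measure_pmf A) (\<lambda>p. if real (kc T (fst p) i) \<le> K then 1/6 else (1::real))"
      by (rule int_bounded_pmf[where C = 1]) simp
    show "integrable (measure_pmf A) (\<lambda>p. real (kc T (fst p) i) / K + 1/6)" using int by simp
    fix p
    show "(if real (kc T (fst p) i) \<le> K then 1/6 else 1) \<le> real (kc T (fst p) i) / K + 1/6"
      using K by (auto simp: field_simps)
  qed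
  also have "\<dots> = measure_pmf.expectation A (\<lambda>p. real (kc T (fst p) i)) / K + 1/6"
    using int by simp
  also have "\<dots> \<le> (real T / real M) / K + 1/6"
    by (rule add_right_mono, rule divide_right_mono[OF E]) (use K in simp)
  also have "(real T / real M) / K = 1/12" using False M by (simp add: K_def field_simps)
  finally show ?thesis by simp
qed


lemma arithF:
  fixes \<gamma> T M k \<delta> :: real
  assumes g: "\<gamma> > 0" and T: "T > 0" and M: "M \<ge> 1" and big: "\<gamma>^2 * M * T \<ge> 144"
    and k0: "0 \<le> k" and kK: "k \<le> 12 * T / M" and d0: "0 \<le> \<delta>" and d1: "\<delta> \<le> \<gamma> * M / 72"
  shows "(k + k^2 * \<delta>^2) / (\<gamma> * T)^2 \<le> 1/6"
proof -
  have B: "(\<gamma> * T)^2 > 0" using g T by simp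
  have "k / (\<gamma> * T)^2 \<le> (12 * T / M) / (\<gamma> * T)^2" by (rule divide_right_mono[OF kK]) (use B in simp)
  also have "\<dots> = 12 / (\<gamma>^2 * M * T)" using g T M by (simp add: field_simps power2_eq_square)
  also have "\<dots> \<le> 12 / 144" by (rule divide_left_mono[OF big]) (use g T M in auto)
  finally have h1: "k / (\<gamma> * T)^2 \<le> 1/12" by simp
  have "k * \<delta> \<le> (12 * T / M) * (\<gamma> * M / 72)" by (rule mult_mono[OF kK d1]) (use T M d0 in auto)
  also have "\<dots> = \<gamma> * T / 6" using M by (simp add: field_simps)
  finally have kd: "k * \<delta> \<le> \<gamma> * T / 6" .
  have "(k * \<delta>)^2 \<le> (\<gamma> * T / 6)^2" by (rule power_mono[OF kd]) (use k0 d0 in simp)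
  then have "(k * \<delta>)^2 / (\<gamma> * T)^2 \<le> (\<gamma> * T / 6)^2 / (\<gamma> * T)^2" by (rule divide_right_mono) (use B in simp)
  also have "\<dots> = 1/36" using g T by (simp add: field_simps power2_eq_square)
  finally have h2: "(k * \<delta>)^2 / (\<gamma> * T)^2 \<le> 1/36" .
  have "(k + k^2 * \<delta>^2) / (\<gamma> * T)^2 = k / (\<gamma> * T)^2 + (k * \<delta>)^2 / (\<gamma> * T)^2"
    by (simp add: add_divide_distrib power_mult_distrib)
  then show ?thesis using h1 h2 by simp
qed

lemma arithS:
  fixes \<gamma> T M k \<delta> :: real
  assumes g: "\<gamma> \<ge> 0" and T: "T \<ge> 0" and M: "M \<ge> 1" and small: "\<gamma>^2 * M * T < 144"
    and k0: "0 \<le> k" and kK: "k \<le> 12 * T / M" and d0: "0 \<le> \<delta>" and d1: "\<delta> \<le> \<gamma> * M / 360"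
  shows "k * \<delta>^2 \<le> 1/75"
proof -
  have "\<delta>^2 \<le> (\<gamma> * M / 360)^2" by (rule power_mono[OF d1 d0])
  then have "k * \<delta>^2 \<le> (12 * T / M) * (\<gamma> * M / 360)^2" by (rule mult_mono[OF kK]) (use T M in auto)
  also have "\<dots> = 12 * (\<gamma>^2 * M * T) / 129600" using M by (simp add: field_simps power2_eq_square)
  also have "\<dots> \<le> 12 * 144 / 129600" using small by (intro divide_right_mono mult_left_mono) auto
  finally show ?thesis by simp
qed


lemma prob_diff_le1: "measure_pmf.prob X Y - measure_pmf.prob X' Y' \<le> 1"
  using measure_pmf.prob_le_1[of X Y] measure_nonneg[of "measure_pmf X'" Y'] by linarith

lemma main_bound:
  fixes N M :: nat and ps :: "nat \<Rightarrow> nat list" and \<gamma> :: real and T :: nat and A :: nonadaptive_alg and \<epsilon> :: real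
  assumes M1: "M \<ge> 1" and H: "\<forall>i<M. is_pauli_string N (ps i) \<and> ps i \<noteq> replicate N 0"
    and inj: "inj_on ps {..<M}" and g0: "0 \<le> \<gamma>" and valid: "valid_alg M T A"
    and succ: "\<forall>\<rho> adv. density_matrix (2 ^ N) \<rho> \<longrightarrow> admissible_adversary \<gamma> T adv \<longrightarrow>
        success_prob ps M T A \<rho> adv \<epsilon> \<ge> 2/3"
  shows "\<epsilon> \<ge> 1/720 * min 1 (\<gamma> * real M)"
proof -
  interpret psetup N M ps using H inj by unfold_locales
  obtain i where i: "i < M" and Ei: "measure_pmf.expectation A (\<lambda>p. real (kc T (fst p) i)) \<le> real T / real M"
    using choose_i[OF M1 valid] by blast
  define K where "K = 12 * real T / real M"
  define g where "g s = (if real (kc T s i) \<le> K then 1/6 else (1::real))" for s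
  have Eg: "measure_pmf.expectation A (\<lambda>p. g (fst p)) < 1/3"
    using markov_g[OF Ei M1] unfolding g_def K_def by simp
  have gb: "\<And>s. \<bar>g s\<bar> \<le> 1" by (simp add: g_def)
  define m1 where "m1 = min 1 (\<gamma> * real M)"
  have m1: "0 \<le> m1" "m1 \<le> 1" "m1 \<le> \<gamma> * real M" using g0 by (auto simp: m1_def)
  have vs: "\<forall>t<T. s t < M" if "(s,e) \<in> set_pmf A" for s e using valid that by (auto simp: valid_alg_def)
  have Psub: "\<And>s. {t. t < T \<and> s t = i} \<subseteq> {..<T}" by auto
  have Mr: "real M \<ge> 1" using M1 by simp
  show ?thesis
  proof (cases "\<gamma>^2 * real M * real T \<ge> 144")
    case True
    note big = True
    have gp: "\<gamma> > 0"
    proof (rule ccontr)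
      assume "\<not> \<gamma> > 0" then have "\<gamma> = 0" using g0 by simp
      then show False using True by simp
    qed
    have Tp: "real T > 0"
    proof (rule ccontr)
      assume "\<not> real T > 0" then have "real T = 0" by simp
      then show False using True by simp
    qed
    define \<delta> where "\<delta> = m1 / 72"
    define a where "a = (1 + \<delta>) / 2"
    have d01: "0 \<le> \<delta>" "\<delta> \<le> 1" using m1 by (auto simp: \<delta>_def)
    have a01: "0 \<le> a" "a \<le> 1" using d01 by (auto simp: a_def)
    define adv where "adv = (\<lambda>s. fadv {t. t < T \<and> s t = i} T (\<gamma> * real T))"
    have adm: "admissible_adversary \<gamma> T adv"
      unfolding admissible_adversary_def adv_def using fadv_changes[of "\<gamma> * real T"] g0 by auto
    have sa: "success_prob ps M T A (rho dd \<delta> (Ob i)) adv \<epsilon> \<ge> 2/3"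
      using succ rho_dens[OF i, of \<delta>] adm d01 by auto
    have sb: "success_prob ps M T A (rho dd (- \<delta>) (Ob i)) adv \<epsilon> \<ge> 2/3"
      using succ rho_dens[OF i, of "- \<delta>"] adm d01 by auto
    have bnd: "measure_pmf.prob (outcome_dist ps T s (rho dd \<delta> (Ob i))) (adv s -` Y)
        - measure_pmf.prob (outcome_dist ps T s (rho dd (- \<delta>) (Ob i))) (adv s -` Y) \<le> g s"
      if se: "(s,e) \<in> set_pmf A" for s e Y
    proof -
      have st: "\<forall>t<T. s t < M" using vs se by blast
      let ?P = "{t. t < T \<and> s t = i}"
      have o1: "outcome_dist ps T s (rho dd \<delta> (Ob i)) = PB T (bf ?P a)"
        using outcome_eq[OF i st, of \<delta>] by (simp add: a_def)
      have o2: "outcome_dist ps T s (rho dd (- \<delta>) (Ob i)) = PB T (bf ?P (1 - a))"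
      proof -
        have e: "(1 + - \<delta>) / 2 = 1 - a" by (simp add: a_def field_simps)
        show ?thesis using outcome_eq[OF i st, of "- \<delta>"] by (simp only: e)
      qed
      show ?thesis
      proof (cases "real (kc T s i) \<le> K")
        case False
        then show ?thesis using prob_diff_le1 by (simp add: g_def)
      next
        case True
        have "measure_pmf.prob (outcome_dist ps T s (rho dd \<delta> (Ob i))) (adv s -` Y)
            - measure_pmf.prob (outcome_dist ps T s (rho dd (- \<delta>) (Ob i))) (adv s -` Y)
            \<le> measure_pmf.prob (PB T (bf ?P a)) {x. \<gamma> * real T < \<bar>real_of_int (wk ?P x T)\<bar>}"
          unfolding o1 o2 adv_def by (rule fold_bound[OF Psub a01])
        also have "\<dots> \<le> (real (card ?P) + (real (card ?P))^2 * (2 * a - 1)^2) / (\<gamma> * real T)^2"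
          by (rule cheb[OF Psub a01]) (use gp Tp in simp)
        also have "\<dots> \<le> 1/6"
        proof -
          have "2 * a - 1 = \<delta>" by (simp add: a_def field_simps)
          moreover have "real (card ?P) \<le> 12 * real T / real M" using True by (simp add: kc_def K_def)
          moreover have "\<delta> \<le> \<gamma> * real M / 72" using m1 by (simp add: \<delta>_def)
          ultimately show ?thesis using arithF[OF gp Tp Mr big, of "real (card ?P)" \<delta>] d01 by simp
        qed
        finally show ?thesis using True by (simp add: g_def)
      qed
    qed
    have "expval (Ob i) (rho dd \<delta> (Ob i)) - expval (Ob i) (rho dd (- \<delta>) (Ob i)) \<le> 2 * \<epsilon>"
      by (rule distinguish[OF bnd gb Eg sa sb i])
    then have "\<delta> \<le> \<epsilon>" using expval_eq[OF i] by simp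
    then show ?thesis using m1 by (simp add: \<delta>_def m1_def[symmetric])
  next
    case False
    then have small: "\<gamma>^2 * real M * real T < 144" by simp
    define \<delta> where "\<delta> = m1 / 360"
    define a where "a = (1 + \<delta>) / 2"
    have d01: "0 \<le> \<delta>" "\<delta> \<le> 1" using m1 by (auto simp: \<delta>_def)
    have a01: "0 \<le> a" "a \<le> 1" using d01 by (auto simp: a_def)
    define adv :: "(nat \<Rightarrow> nat) \<Rightarrow> (nat \<Rightarrow> bool) \<Rightarrow> (nat \<Rightarrow> bool)" where "adv = (\<lambda>s x. x)"
    have adm: "admissible_adversary \<gamma> T adv"
      unfolding admissible_adversary_def adv_def using g0 by simp
    have sa: "success_prob ps M T A (rho dd \<delta> (Ob i)) adv \<epsilon> \<ge> 2/3"
      using succ rho_dens[OF i, of \<delta>] adm d01 by auto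
    have sb: "success_prob ps M T A (rho dd 0 (Ob i)) adv \<epsilon> \<ge> 2/3"
      using succ rho_dens[OF i, of 0] adm by auto
    have bnd: "measure_pmf.prob (outcome_dist ps T s (rho dd \<delta> (Ob i))) (adv s -` Y)
        - measure_pmf.prob (outcome_dist ps T s (rho dd 0 (Ob i))) (adv s -` Y) \<le> g s"
      if se: "(s,e) \<in> set_pmf A" for s e Y
    proof -
      have st: "\<forall>t<T. s t < M" using vs se by blast
      let ?P = "{t. t < T \<and> s t = i}"
      have o1: "outcome_dist ps T s (rho dd \<delta> (Ob i)) = PB T (bf ?P a)"
        using outcome_eq[OF i st, of \<delta>] by (simp add: a_def)
      have o2: "outcome_dist ps T s (rho dd 0 (Ob i)) = PB T (\<lambda>_. 1/2)"
      proof -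
        have "bf ?P ((1 + 0) / 2) = (\<lambda>_. 1/2)" by (auto simp: bf_def)
        then show ?thesis using outcome_eq[OF i st, of 0] by simp
      qed
      have av: "adv s -` Y = Y" by (simp add: adv_def)
      show ?thesis
      proof (cases "real (kc T s i) \<le> K")
        case False
        then show ?thesis using prob_diff_le1 by (simp add: g_def)
      next
        case True
        let ?k = "card ?P"
        have kd: "real ?k * \<delta>^2 \<le> 1/75"
        proof -
          have "real (card ?P) \<le> 12 * real T / real M" using True by (simp add: kc_def K_def)
          moreover have "\<delta> \<le> \<gamma> * real M / 360" using m1 by (simp add: \<delta>_def)
          ultimately show ?thesis using arithS[OF g0 _ Mr small, of "real ?k" \<delta>] d01 by simp
        qed
        have "measure_pmf.prob (outcome_dist ps T s (rho dd \<delta> (Ob i))) (adv s -` Y)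
            - measure_pmf.prob (outcome_dist ps T s (rho dd 0 (Ob i))) (adv s -` Y)
            \<le> ((2 * a^2 + 2 * (1 - a)^2) ^ ?k - 1) / (2 * (1/6)) + (1/6) / 2"
          unfolding o1 o2 av by (rule stat_bound[OF Psub a01]) simp
        also have "2 * a^2 + 2 * (1 - a)^2 = 1 + \<delta>^2" by (simp add: a_def power2_eq_square field_simps)
        also have "(1 + \<delta>^2) ^ ?k \<le> 1 + 2 * (real ?k * \<delta>^2)"
          by (rule pow_exp_bound) (use kd in auto)
        also have "((1 + 2 * (real ?k * \<delta>^2)) - 1) / (2 * (1/6)) + (1/6) / 2 \<le> 1/6" using kd by simp
        finally show ?thesis using True by (simp add: g_def)
      qed
    qed
    have "expval (Ob i) (rho dd \<delta> (Ob i)) - expval (Ob i) (rho dd 0 (Ob i)) \<le> 2 * \<epsilon>"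
      by (rule distinguish[OF bnd gb Eg sa sb i])
    then have "\<delta> \<le> 2 * \<epsilon>" using expval_eq[OF i] by simp
    then show ?thesis using m1 by (simp add: \<delta>_def m1_def[symmetric])
  qed
qed

theorem theorem8:
  "\<exists>c>0. \<forall>(N::nat) (M::nat) (ps :: nat \<Rightarrow> nat list) (\<gamma>::real) (T::nat) (A::nonadaptive_alg) (\<epsilon>::real).
     M \<ge> 1 \<longrightarrow>
     (\<forall>i<M. is_pauli_string N (ps i) \<and> ps i \<noteq> replicate N 0) \<longrightarrow>
     inj_on ps {..<M} \<longrightarrow>
     0 \<le> \<gamma> \<longrightarrow> \<gamma> \<le> 1 \<longrightarrow>
     valid_alg M T A \<longrightarrow>
     (\<forall>\<rho> adv. density_matrix (2 ^ N) \<rho> \<longrightarrow> admissible_adversary \<gamma> T adv \<longrightarrow>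
        success_prob ps M T A \<rho> adv \<epsilon> \<ge> 2/3) \<longrightarrow>
     \<epsilon> \<ge> c * min 1 (\<gamma> * real M)"
proof (intro exI[of _ "1/720::real"] conjI allI impI)
  show "(0::real) < 1/720" by simp
  fix N M :: nat and ps :: "nat \<Rightarrow> nat list" and \<gamma> :: real and T :: nat and A :: nonadaptive_alg and \<epsilon> :: real
  assume "M \<ge> 1" "\<forall>i<M. is_pauli_string N (ps i) \<and> ps i \<noteq> replicate N 0" "inj_on ps {..<M}"
    "0 \<le> \<gamma>" "\<gamma> \<le> 1" "valid_alg M T A"
    "\<forall>\<rho> adv. density_matrix (2 ^ N) \<rho> \<longrightarrow> admissible_adversary \<gamma> T adv \<longrightarrow> success_prob ps M T A \<rho> adv \<epsilon> \<ge> 2/3"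
  then show "\<epsilon> \<ge> 1/720 * min 1 (\<gamma> * real M)" by (intro main_bound) auto
qed


end
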